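(* For every fixed-precision transformer $T$ over a finite alphabet $\Sigma$ with bit precision $p$, hidden dimension $d$ and depth $L$, there exists a $\mathsf{C\text{-}RASP}_+$ program $P$ that simulates $T$ and has size $O(|\Sigma|\,L\,p^2\,d\,2^{p^3d})$, depth $O(L)$, precision $O(p)$ and girth $O(p)$.
   Context: $\mathbb F=\mathbb F_{p,s}$ is the set of rationals $m\cdot 2^{-s}$ with $m\in\mathbb Z$, $-2^{p-1}\le m<2^{p-1}$; $\mathrm{round}(x)$ is the greatest element of $\mathbb F$ that is $\le x$. A (future-masked) fixed-precision transformer of depth $L$ and dimension $d$ consists of functions $E:\Sigma\to\mathbb F^d$, $W_Q^{(\ell)},W_K^{(\ell)},W_V^{(\ell)},f^{(\ell)}:\mathbb F^d\to\mathbb F^d$ and $W_{\mathrm{out}}:\mathbb F^d\to\mathbb F$; on input $u$: $h^{(0)}_i=E(u_i)$; per layer $q_i,k_i,v_i$ are the three maps applied to $h^{(\ell-1)}_i$, $s_{ij}=q_i\cdot k_j$, $B_i=\sum_{j\le i}\mathrm{round}(\exp(s_{ij}))$, $\alpha_{ij}=\mathrm{round}(\mathrm{round}(\exp(s_{ij}))/B_i)$, $c_i=\mathrm{round}(\sum_{j\le i}\alpha_{ij}v_j)$, $h^{(\ell)}_i=f^{(\ell)}(c_i+h^{(\ell-1)}_i)$; the output at position $i$ is $T(u)_i=W_{\mathrm{out}}(h^{(L)}_i)$. $\mathsf{C\text{-}RASP}_+$: $\phi ::= \sigma \mid \neg\phi \mid \phi_1\wedge\phi_2 \mid \sum_t\alpha_t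 t\sim k$, $t ::= \#[\phi]\mid c$, $\alpha_t,k,c\in\mathbb N$, ${\sim}\in\{\ge,>,=,<,\le\}$, with $\#[\phi]$ counting positions $j\le i$ satisfying $\phi$. A formula $\phi$ simulates $T$ if for all $w\in\Sigma^*$ and positions $i$ of $w$: $w,i\models\phi$ iff the output of $T$ on $\texttt{<BOS>}\cdot w$ (with a special beginning-of-sequence symbol prepended) at the position of $w_i$ is $>0$. Program size counts symbols (constants in binary, references to earlier lines as 1); depth counts nesting of $\#$; precision is the number of bits of the largest constant; girth is the maximum number of summands in a sum. *)

theory Defs
  imports Complex_Main
begin

definition Fnum :: "nat \<Rightarrow> nat \<Rightarrow> real set" where
  "Fnum p s = {real_of_int m / 2 ^ s | m. - (2 ^ (p - 1)) \<le> m \<and> m < 2 ^ (p - 1)}"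

text \<open>round(x): greatest element of F that is <= x.  Convention when no such element
  exists (x below the minimum of F): the minimum of F (saturation).\<close>
definition rnd :: "nat \<Rightarrow> nat \<Rightarrow> real \<Rightarrow> real" where
  "rnd p s x = (if \<exists>y\<in>Fnum p s. y \<le> x then Max {y \<in> Fnum p s. y \<le> x} else Min (Fnum p s))"

definition Fvec :: "nat \<Rightarrow> nat \<Rightarrow> nat \<Rightarrow> real list set" where
  "Fvec p s d = {x. length x = d \<and> set x \<subseteq> Fnum p s}"

definition dotp :: "real list \<Rightarrow> real list \<Rightarrow> real" where
  "dotp x y = sum_list (map2 (*) x y)"

text \<open>Input symbols are natural numbers; the beginning-of-sequence symbol is None.
  A layer is (W_Q, W_K, W_V, f).\<close>
type_synonym vecfun = "real list \<Rightarrow> real list"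

record transformer =
  emb    :: "nat option \<Rightarrow> real list"
  layers :: "(vecfun \<times> vecfun \<times> vecfun \<times> vecfun) list"
  wout   :: "real list \<Rightarrow> real"

definition tdepth :: "transformer \<Rightarrow> nat" where
  "tdepth T = length (layers T)"

definition wf_transformer :: "nat set \<Rightarrow> nat \<Rightarrow> nat \<Rightarrow> nat \<Rightarrow> transformer \<Rightarrow> bool" where
  "wf_transformer \<Sigma> p s d T \<longleftrightarrow>
     (\<forall>a \<in> insert None (Some ` \<Sigma>). emb T a \<in> Fvec p s d) \<and>
     (\<forall>(WQ, WK, WV, f) \<in> set (layers T).
        (\<forall>x \<in> Fvec p s d. WQ x \<in> Fvec p s d \<and> WK x \<in> Fvec p s d \<and> WV x \<in> Fvec p s d) \<and>
        (\<forall>x. length x = d \<longrightarrow> f x \<in> Fvec p s d)) \<and>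
     (\<forall>x \<in> Fvec p s d. wout T x \<in> Fnum p s)"

definition layer_apply :: "nat \<Rightarrow> nat \<Rightarrow> nat \<Rightarrow> (vecfun \<times> vecfun \<times> vecfun \<times> vecfun)
    \<Rightarrow> real list list \<Rightarrow> real list list" where
  "layer_apply p s d lay H =
    (case lay of (WQ, WK, WV, f) \<Rightarrow>
      let q = (\<lambda>i. WQ (H ! i)); k = (\<lambda>j. WK (H ! j)); v = (\<lambda>j. WV (H ! j));
          e = (\<lambda>i j. rnd p s (exp (dotp (q i) (k j))));
          B = (\<lambda>i. \<Sum>j\<le>i. e i j);
          \<alpha> = (\<lambda>i j. rnd p s (e i j / B i));
          c = (\<lambda>i. map (\<lambda>t. rnd p s (\<Sum>j\<le>i. \<alpha> i j * (v j ! t))) [0..<d])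
      in map (\<lambda>i. f (map2 (+) (c i) (H ! i))) [0..<length H])"

definition hidden :: "nat \<Rightarrow> nat \<Rightarrow> nat \<Rightarrow> transformer \<Rightarrow> nat option list \<Rightarrow> real list list" where
  "hidden p s d T u = foldl (\<lambda>H lay. layer_apply p s d lay H) (map (emb T) u) (layers T)"

definition tout :: "nat \<Rightarrow> nat \<Rightarrow> nat \<Rightarrow> transformer \<Rightarrow> nat option list \<Rightarrow> nat \<Rightarrow> real" where
  "tout p s d T u i = wout T (hidden p s d T u ! i)"

datatype cmp = Ge | Gt | Eq | Lt | Le

datatype form =
    Sym nat
  | Neg form
  | Conj form form
  | Cmp "(nat \<times> cterm) list" cmp nat     \<comment> \<open>sum of alpha_t * t  ~  k\<close>
  | Ref nat                             \<comment> \<open>reference to an earlier program line\<close>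
and cterm =
    Cnt form
  | Const nat

fun cmp_sem :: "cmp \<Rightarrow> nat \<Rightarrow> nat \<Rightarrow> bool" where
  "cmp_sem Ge a b = (a \<ge> b)"
| "cmp_sem Gt a b = (a > b)"
| "cmp_sem Eq a b = (a = b)"
| "cmp_sem Lt a b = (a < b)"
| "cmp_sem Le a b = (a \<le> b)"

text \<open>Semantics of (reference-free) formulas: w, i |= phi (positions 0-based).\<close>
primrec sat :: "nat list \<Rightarrow> nat \<Rightarrow> form \<Rightarrow> bool"
and tval :: "nat list \<Rightarrow> nat \<Rightarrow> cterm \<Rightarrow> nat" where
  "sat w i (Sym a) = (w ! i = a)"
| "sat w i (Neg \<phi>) = (\<not> sat w i \<phi>)"
| "sat w i (Conj \<phi> \<psi>) = (sat w i \<phi> \<and> sat w i \<psi>)"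
| "sat w i (Cmp ts c k) = cmp_sem c (sum_list (map (\<lambda>(a, n). a * n) (map (map_prod id (tval w i)) ts))) k"
| "sat w i (Ref n) = False"
| "tval w i (Cnt \<phi>) = card {j. j \<le> i \<and> sat w j \<phi>}"
| "tval w i (Const c) = c"

primrec subst :: "form list \<Rightarrow> form \<Rightarrow> form"
and subst_t :: "form list \<Rightarrow> cterm \<Rightarrow> cterm" where
  "subst L (Sym a) = Sym a"
| "subst L (Neg \<phi>) = Neg (subst L \<phi>)"
| "subst L (Conj \<phi> \<psi>) = Conj (subst L \<phi>) (subst L \<psi>)"
| "subst L (Cmp ts c k) = Cmp (map (map_prod id (subst_t L)) ts) c k"
| "subst L (Ref n) = (if n < length L then L ! n else Ref n)"
| "subst_t L (Cnt \<phi>) = Cnt (subst L \<phi>)"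
| "subst_t L (Const c) = Const c"

primrec refs :: "form \<Rightarrow> nat set" and refs_t :: "cterm \<Rightarrow> nat set" where
  "refs (Sym a) = {}"
| "refs (Neg \<phi>) = refs \<phi>"
| "refs (Conj \<phi> \<psi>) = refs \<phi> \<union> refs \<psi>"
| "refs (Cmp ts c k) = \<Union> (set (map snd (map (map_prod id refs_t) ts)))"
| "refs (Ref n) = {n}"
| "refs_t (Cnt \<phi>) = refs \<phi>"
| "refs_t (Const c) = {}"

definition wf_prog :: "form list \<Rightarrow> bool" where
  "wf_prog P \<longleftrightarrow> P \<noteq> [] \<and> (\<forall>k < length P. \<forall>j \<in> refs (P ! k). j < k)"

definition expand_lines :: "form list \<Rightarrow> form list" where
  "expand_lines P = foldl (\<lambda>acc l. acc @ [subst acc l]) [] P"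

definition prog_formula :: "form list \<Rightarrow> form" where
  "prog_formula P = last (expand_lines P)"

fun bitlen :: "nat \<Rightarrow> nat" where
  "bitlen n = (if n < 2 then 1 else 1 + bitlen (n div 2))"

primrec fsize :: "form \<Rightarrow> nat" and tsize :: "cterm \<Rightarrow> nat" where
  "fsize (Sym a) = 1"
| "fsize (Neg \<phi>) = 1 + fsize \<phi>"
| "fsize (Conj \<phi> \<psi>) = 1 + fsize \<phi> + fsize \<psi>"
| "fsize (Cmp ts c k) = sum_list (map (\<lambda>(a, n). 1 + bitlen a + n) (map (map_prod id tsize) ts)) + 1 + bitlen k"
| "fsize (Ref n) = 1"
| "tsize (Cnt \<phi>) = 1 + fsize \<phi>"
| "tsize (Const c) = bitlen c"

definition prog_size :: "form list \<Rightarrow> nat" where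
  "prog_size P = sum_list (map fsize P)"

primrec fdepth :: "form \<Rightarrow> nat" and tdepth_t :: "cterm \<Rightarrow> nat" where
  "fdepth (Sym a) = 0"
| "fdepth (Neg \<phi>) = fdepth \<phi>"
| "fdepth (Conj \<phi> \<psi>) = max (fdepth \<phi>) (fdepth \<psi>)"
| "fdepth (Cmp ts c k) = Max (insert 0 (set (map snd (map (map_prod id tdepth_t) ts))))"
| "fdepth (Ref n) = 0"
| "tdepth_t (Cnt \<phi>) = 1 + fdepth \<phi>"
| "tdepth_t (Const c) = 0"

definition prog_depth :: "form list \<Rightarrow> nat" where
  "prog_depth P = fdepth (prog_formula P)"

primrec fconsts :: "form \<Rightarrow> nat set" and tconsts :: "cterm \<Rightarrow> nat set" where
  "fconsts (Sym a) = {}"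
| "fconsts (Neg \<phi>) = fconsts \<phi>"
| "fconsts (Conj \<phi> \<psi>) = fconsts \<phi> \<union> fconsts \<psi>"
| "fconsts (Cmp ts c k) = insert k (\<Union> (set (map (\<lambda>(a, S). insert a S) (map (map_prod id tconsts) ts))))"
| "fconsts (Ref n) = {}"
| "tconsts (Cnt \<phi>) = fconsts \<phi>"
| "tconsts (Const c) = {c}"

definition prog_precision :: "form list \<Rightarrow> nat" where
  "prog_precision P = bitlen (Max (insert 0 (\<Union>l \<in> set P. fconsts l)))"

primrec fgirth :: "form \<Rightarrow> nat" and tgirth :: "cterm \<Rightarrow> nat" where
  "fgirth (Sym a) = 0"
| "fgirth (Neg \<phi>) = fgirth \<phi>"
| "fgirth (Conj \<phi> \<psi>) = max (fgirth \<phi>) (fgirth \<psi>)"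
| "fgirth (Cmp ts c k) = Max (insert (length ts) (set (map snd (map (map_prod id tgirth) ts))))"
| "fgirth (Ref n) = 0"
| "tgirth (Cnt \<phi>) = fgirth \<phi>"
| "tgirth (Const c) = 0"

definition prog_girth :: "form list \<Rightarrow> nat" where
  "prog_girth P = Max (insert 0 (fgirth ` set P))"

definition simulates :: "nat set \<Rightarrow> nat \<Rightarrow> nat \<Rightarrow> nat \<Rightarrow> transformer \<Rightarrow> form list \<Rightarrow> bool" where
  "simulates \<Sigma> p s d T P \<longleftrightarrow>
     (\<forall>w i. set w \<subseteq> \<Sigma> \<longrightarrow> i < length w \<longrightarrow>
        (sat w i (prog_formula P) \<longleftrightarrow> tout p s d T (None # map Some w) (Suc i) > 0))"

end

theory Submission
  imports Defs
begin


primrec satr :: "(nat \<Rightarrow> nat \<Rightarrow> bool) \<Rightarrow> nat list \<Rightarrow> nat \<Rightarrow> form \<Rightarrow> bool"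
and tvalr :: "(nat \<Rightarrow> nat \<Rightarrow> bool) \<Rightarrow> nat list \<Rightarrow> nat \<Rightarrow> cterm \<Rightarrow> nat" where
  "satr env w i (Sym a) = (w ! i = a)"
| "satr env w i (Neg \<phi>) = (\<not> satr env w i \<phi>)"
| "satr env w i (Conj \<phi> \<psi>) = (satr env w i \<phi> \<and> satr env w i \<psi>)"
| "satr env w i (Cmp ts c k) = cmp_sem c (sum_list (map (\<lambda>(a, n). a * n) (map (map_prod id (tvalr env w i)) ts))) k"
| "satr env w i (Ref n) = env n i"
| "tvalr env w i (Cnt \<phi>) = card {j. j \<le> i \<and> satr env w j \<phi>}"
| "tvalr env w i (Const c) = c"

lemma subst_sat:
  "(\<forall>n\<in>refs \<phi>. n < length L) \<Longrightarrow> sat w i (subst L \<phi>) = satr (\<lambda>n j. sat w j (L ! n)) w i \<phi>"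
  "(\<forall>n\<in>refs_t t. n < length L) \<Longrightarrow> tval w i (subst_t L t) = tvalr (\<lambda>n j. sat w j (L ! n)) w i t"
proof (induction \<phi> and t arbitrary: i and i)
  case (Cmp ts c k)
  have "map (map_prod id (tval w i)) (map (map_prod id (subst_t L)) ts)
      = map (map_prod id (tvalr (\<lambda>n j. sat w j (L ! n)) w i)) ts"
  unfolding map_map
  proof (rule map_cong[OF refl])
    fix x assume x: "x \<in> set ts"
    obtain a t where xt: "x = (a, t)" by (cases x)
    have "\<forall>n\<in>refs_t t. n < length L" using Cmp.prems x xt by force
    then have "tval w i (subst_t L t) = tvalr (\<lambda>n j. sat w j (L ! n)) w i t"
      using Cmp.IH[of x t] x xt by auto
    then show "(map_prod id (tval w i) \<circ> map_prod id (subst_t L)) x = map_prod id (tvalr (\<lambda>n j. sat w j (L ! n)) w i) x"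
      using xt by simp
  qed
  then show ?case by (simp only: sat.simps subst.simps satr.simps)
qed auto

lemma satr_cong:
  "(\<forall>n\<in>refs \<phi>. \<forall>j\<le>i. e1 n j = e2 n j) \<Longrightarrow> satr e1 w i \<phi> = satr e2 w i \<phi>"
  "(\<forall>n\<in>refs_t t. \<forall>j\<le>i. e1 n j = e2 n j) \<Longrightarrow> tvalr e1 w i t = tvalr e2 w i t"
proof (induction \<phi> and t arbitrary: i and i)
  case (Cmp ts c k)
  have "map (map_prod id (tvalr e1 w i)) ts = map (map_prod id (tvalr e2 w i)) ts"
  proof (rule map_cong[OF refl])
    fix x assume x: "x \<in> set ts"
    obtain a t where xt: "x = (a, t)" by (cases x)
    have "\<forall>n\<in>refs_t t. \<forall>j\<le>i. e1 n j = e2 n j" using Cmp.prems x xt by force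
    then have "tvalr e1 w i t = tvalr e2 w i t"
      using Cmp.IH[of x t] x xt by auto
    then show "map_prod id (tvalr e1 w i) x = map_prod id (tvalr e2 w i) x"
      using xt by simp
  qed
  then show ?case by (simp only: satr.simps)
next
  case (Cnt \<phi>)
  have "{j. j \<le> i \<and> satr e1 w j \<phi>} = {j. j \<le> i \<and> satr e2 w j \<phi>}"
    using Cnt by (auto dest: le_trans)
  then show ?case by simp
qed auto

lemma expand_lines_snoc: "expand_lines (P @ [l]) = expand_lines P @ [subst (expand_lines P) l]"
  by (simp add: expand_lines_def)

lemma length_expand[simp]: "length (expand_lines P) = length P"
  by (induction P rule: rev_induct) (auto simp: expand_lines_snoc, simp add: expand_lines_def)

lemma expand_take: "take n (expand_lines P) = expand_lines (take n P)"
proof (induction P rule: rev_induct)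
  case Nil then show ?case by (simp add: expand_lines_def)
next
  case (snoc l P)
  show ?case
  proof (cases "n \<le> length P")
    case True then show ?thesis using snoc by (simp add: expand_lines_snoc)
  next
    case False then show ?thesis by (simp add: expand_lines_snoc)
  qed
qed

lemma expand_nth: "n < length P \<Longrightarrow> expand_lines P ! n = subst (expand_lines (take n P)) (P ! n)"
proof (induction P rule: rev_induct)
  case Nil then show ?case by simp
next
  case (snoc l P)
  show ?case
  proof (cases "n < length P")
    case True then show ?thesis using snoc by (simp add: expand_lines_snoc nth_append)
  next
    case False then have "n = length P" using snoc by simp
    then show ?thesis by (simp add: expand_lines_snoc nth_append)
  qed
qed

lemma expand_sat:
  assumes "wf_prog P" "n < length P"
  shows "sat w i (expand_lines P ! n) = satr (\<lambda>m j. sat w j (expand_lines P ! m)) w i (P ! n)"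
proof -
  have r: "\<forall>m\<in>refs (P ! n). m < n" using assms unfolding wf_prog_def by blast
  have "sat w i (expand_lines P ! n) = sat w i (subst (expand_lines (take n P)) (P ! n))"
    using assms by (simp add: expand_nth)
  also have "\<dots> = satr (\<lambda>m j. sat w j (expand_lines (take n P) ! m)) w i (P ! n)"
    using r assms by (intro subst_sat) (auto simp: expand_take[symmetric])
  also have "\<dots> = satr (\<lambda>m j. sat w j (expand_lines P ! m)) w i (P ! n)"
    using r by (intro satr_cong) (auto simp: expand_take[symmetric])
  finally show ?thesis .
qed

lemma depth_subst:
  "(\<forall>n\<in>refs \<phi>. n < length L \<and> fdepth (L ! n) \<le> D) \<Longrightarrow> fdepth (subst L \<phi>) \<le> fdepth \<phi> + D"
  "(\<forall>n\<in>refs_t t. n < length L \<and> fdepth (L ! n) \<le> D) \<Longrightarrow> tdepth_t (subst_t L t) \<le> tdepth_t t + D"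
proof (induction \<phi> and t)
  case (Cmp ts c k)
  have "\<forall>x\<in>set ts. tdepth_t (subst_t L (snd x)) \<le> tdepth_t (snd x) + D"
  proof
    fix x assume x: "x \<in> set ts"
    obtain a t where xt: "x = (a, t)" by (cases x)
    have "\<forall>n\<in>refs_t t. n < length L \<and> fdepth (L ! n) \<le> D" using Cmp.prems x xt by force
    then show "tdepth_t (subst_t L (snd x)) \<le> tdepth_t (snd x) + D"
      using Cmp.IH[of x t] x xt by auto
  qed
  moreover have "\<forall>x\<in>set ts. tdepth_t (snd x) \<le> Max (insert 0 ((\<lambda>x. tdepth_t (snd x)) ` set ts))"
    by (auto intro: Max_ge)
  ultimately have "\<forall>x\<in>set ts. tdepth_t (subst_t L (snd x)) \<le> Max (insert 0 ((\<lambda>x. tdepth_t (snd x)) ` set ts)) + D"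
    by (meson add_right_mono le_trans)
  then show ?case
    by (auto simp: Max_le_iff image_image)
qed auto

fun ORL :: "form list \<Rightarrow> form" where
  "ORL [] = Cmp [] Gt 0"
| "ORL (a # as) = Neg (Conj (Neg a) (Neg (ORL as)))"

fun ANDL :: "form list \<Rightarrow> form" where
  "ANDL [] = Cmp [] Ge 0"
| "ANDL (a # as) = Conj a (ANDL as)"

lemma satr_ORL[simp]: "satr env w i (ORL fs) = (\<exists>f\<in>set fs. satr env w i f)"
  by (induction fs) auto
lemma satr_ANDL[simp]: "satr env w i (ANDL fs) = (\<forall>f\<in>set fs. satr env w i f)"
  by (induction fs) auto
lemma refs_ORL[simp]: "refs (ORL fs) = (\<Union>f\<in>set fs. refs f)"
  by (induction fs) auto
lemma refs_ANDL[simp]: "refs (ANDL fs) = (\<Union>f\<in>set fs. refs f)"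
  by (induction fs) auto
lemma fconsts_ORL[simp]: "fconsts (ORL fs) = insert 0 (\<Union>f\<in>set fs. fconsts f)"
  by (induction fs) auto
lemma fconsts_ANDL[simp]: "fconsts (ANDL fs) = insert 0 (\<Union>f\<in>set fs. fconsts f)"
  by (induction fs) auto
lemma fdepth_ORL: "(\<forall>f\<in>set fs. fdepth f \<le> D) \<Longrightarrow> fdepth (ORL fs) \<le> D"
  by (induction fs) auto
lemma fdepth_ANDL: "(\<forall>f\<in>set fs. fdepth f \<le> D) \<Longrightarrow> fdepth (ANDL fs) \<le> D"
  by (induction fs) auto
lemma fgirth_ORL: "(\<forall>f\<in>set fs. fgirth f \<le> D) \<Longrightarrow> fgirth (ORL fs) \<le> D"
  by (induction fs) auto
lemma fgirth_ANDL: "(\<forall>f\<in>set fs. fgirth f \<le> D) \<Longrightarrow> fgirth (ANDL fs) \<le> D"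
  by (induction fs) auto
lemma fsize_ORL: "(\<forall>f\<in>set fs. fsize f \<le> M) \<Longrightarrow> fsize (ORL fs) \<le> length fs * (M + 4) + 2"
  by (induction fs) auto
lemma fsize_ANDL: "(\<forall>f\<in>set fs. fsize f \<le> M) \<Longrightarrow> fsize (ANDL fs) \<le> length fs * (M + 1) + 2"
  by (induction fs) auto

lemma sum_list_le_len: "(\<forall>x\<in>set xs. f x \<le> (M::nat)) \<Longrightarrow> sum_list (map f xs) \<le> length xs * M"
  by (induction xs) auto

lemma bitlen_le: "n < 2 ^ k \<Longrightarrow> bitlen n \<le> k + 1"
proof (induction k arbitrary: n)
  case 0 then show ?case by simp
next
  case (Suc k)
  show ?case
  proof (cases "n < 2")
    case True then show ?thesis by simp
  next
    case False
    then have "n div 2 < 2 ^ k" using Suc.prems by auto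
    then have "bitlen (n div 2) \<le> k + 1" by (rule Suc.IH)
    then show ?thesis using False by simp
  qed
qed

declare bitlen.simps[simp del]

lemma bit_decomp: "(\<Sum>b<k. 2 ^ b * (a div 2 ^ b mod 2)) = (a::nat) mod 2 ^ k"
proof (induction k)
  case 0 then show ?case by simp
next
  case (Suc k)
  have "a mod 2 ^ Suc k = a mod (2 ^ k * 2)" by (simp add: mult.commute)
  also have "\<dots> = 2 ^ k * (a div 2 ^ k mod 2) + a mod 2 ^ k" by (rule mod_mult2_eq)
  finally show ?case using Suc by simp
qed


definition BitSet :: "real list list \<Rightarrow> nat \<Rightarrow> (real list \<Rightarrow> nat) \<Rightarrow> nat \<Rightarrow> form" where
  "BitSet vs r a b = ORL (map (\<lambda>k. Ref (r + k)) (filter (\<lambda>k. odd (a (vs ! k) div 2 ^ b)) [0..<length vs]))"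

definition TestF :: "real list list \<Rightarrow> nat \<Rightarrow> nat \<Rightarrow> (real list \<Rightarrow> nat) \<Rightarrow> nat \<Rightarrow> cmp \<Rightarrow> nat \<Rightarrow> form" where
  "TestF vs r kb a c0 cmp u = Cmp ((1, Const c0) # map (\<lambda>b. (2 ^ b, Cnt (BitSet vs r a b))) [0..<kb]) cmp u"

lemma fdepth_ORL_refs[simp]: "fdepth (ORL (map (\<lambda>k. Ref (f k)) xs)) = 0"
  by (induction xs) auto
lemma fgirth_ORL_refs[simp]: "fgirth (ORL (map (\<lambda>k. Ref (f k)) xs)) = 0"
  by (induction xs) auto
lemma fconsts_ORL_refs[simp]: "fconsts (ORL (map (\<lambda>k. Ref (f k)) xs)) = {0}"
  by (induction xs) auto

lemma BitSet_simps[simp]: "fdepth (BitSet vs r a b) = 0" "fgirth (BitSet vs r a b) = 0"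
  "fconsts (BitSet vs r a b) = {0}"
  by (simp_all add: BitSet_def)

lemma refs_BitSet: "refs (BitSet vs r a b) \<subseteq> {r..<r + length vs}"
  by (auto simp: BitSet_def)

lemma fsize_BitSet: "fsize (BitSet vs r a b) \<le> 5 * length vs + 2"
proof -
  have "fsize (BitSet vs r a b)
      \<le> length (map (\<lambda>k. Ref (r + k)) (filter (\<lambda>k. odd (a (vs ! k) div 2 ^ b)) [0..<length vs])) * (1 + 4) + 2"
    unfolding BitSet_def by (rule fsize_ORL) auto
  moreover have "length (filter (\<lambda>k. odd (a (vs ! k) div 2 ^ b)) [0..<length vs]) \<le> length vs"
    using length_filter_le[of _ "[0..<length vs]"] by simp
  ultimately show ?thesis by simp
qed

lemma satr_BitSet:
  assumes env: "\<forall>k<length vs. env (r + k) j = (h = vs ! k)" and hin: "h \<in> set vs"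
  shows "satr env w j (BitSet vs r a b) = odd (a h div 2 ^ b)"
proof -
  obtain k where k: "k < length vs" "vs ! k = h" using hin by (meson in_set_conv_nth)
  show ?thesis using env k unfolding BitSet_def by auto
qed

lemma card_le_sum: "card {j. j \<le> (i::nat) \<and> Q j} = (\<Sum>j\<le>i. if Q j then 1 else 0)"
proof -
  have "{j. j \<le> i \<and> Q j} = {j \<in> {..i}. Q j}" by blast
  then have "card {j. j \<le> i \<and> Q j} = (\<Sum>j\<in>{j \<in> {..i}. Q j}. 1)" by (simp only: card_eq_sum)
  also have "\<dots> = (\<Sum>j\<le>i. if Q j then 1 else 0)" by (rule sum.inter_filter) simp
  finally show ?thesis .
qed

lemma sum_list_upt_lt: "sum_list (map f [0..<k]) = sum f {..<k}"
  by (simp add: sum_set_upt_conv_sum_list_nat[symmetric] atLeast0LessThan)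

lemma refs_TestF: "refs (TestF vs r kb a c0 cmp u) \<subseteq> {r..<r + length vs}"
  using refs_BitSet by (fastforce simp: TestF_def)

lemma fdepth_TestF: "fdepth (TestF vs r kb a c0 cmp u) \<le> 1"
  by (simp add: TestF_def Max_le_iff)

lemma fgirth_TestF: "fgirth (TestF vs r kb a c0 cmp u) \<le> kb + 1"
  by (simp add: TestF_def Max_le_iff)

lemma fconsts_TestF: "c0 \<le> X \<Longrightarrow> u \<le> X \<Longrightarrow> 2 ^ kb \<le> X \<Longrightarrow> c \<in> fconsts (TestF vs r kb a c0 cmp u) \<Longrightarrow> c \<le> X"
proof -
  assume h: "c0 \<le> X" "u \<le> X" "2 ^ kb \<le> X" "c \<in> fconsts (TestF vs r kb a c0 cmp u)"
  have pw: "2 ^ b \<le> X" if "b \<le> kb" for b :: nat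
  proof -
    have "(2::nat) ^ b \<le> 2 ^ kb" using that by (intro power_increasing) auto
    then show ?thesis using h(3) le_trans by blast
  qed
  have one: "1 \<le> X" using h(3) by (meson le_trans one_le_numeral one_le_power)
  have "fconsts (TestF vs r kb a c0 cmp u) \<subseteq> {u, 1, c0, 0} \<union> {2 ^ b | b. b < kb}"
    by (auto simp: TestF_def)
  then have "c \<in> {u, 1, c0, 0} \<union> {2 ^ b | b. b < kb}" using h(4) by blast
  then show ?thesis
  proof
    assume "c \<in> {u, 1, c0, 0}" then show ?thesis using h(1,2) one by blast
  next
    assume "c \<in> {2 ^ b | b. b < kb}" then obtain b where "c = 2 ^ b" "b < kb" by blast
    then show ?thesis using pw[of b] by simp
  qed
qed

lemma bitlen_pow2: "bitlen (2 ^ b) \<le> b + 2"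
  using bitlen_le[of "2 ^ b" "Suc b"] by simp



lemma TestF_sem:
  assumes env: "\<forall>j\<le>i. \<forall>k<length vs. env (r + k) j = (Hj j = vs ! k)"
    and Hin: "\<forall>j\<le>i. Hj j \<in> set vs"
    and ab: "\<forall>y\<in>set vs. a y < 2 ^ kb"
  shows "satr env w i (TestF vs r kb a cz cmp u) = cmp_sem cmp (cz + (\<Sum>j\<le>i. a (Hj j))) u"
proof -
  have cnt: "card {j. j \<le> i \<and> satr env w j (BitSet vs r a b)} = (\<Sum>j\<le>i. a (Hj j) div 2 ^ b mod 2)" for b
  proof -
    have "{j. j \<le> i \<and> satr env w j (BitSet vs r a b)} = {j. j \<le> i \<and> odd (a (Hj j) div 2 ^ b)}"
      using env Hin satr_BitSet by blast
    then have "card {j. j \<le> i \<and> satr env w j (BitSet vs r a b)}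
       = card {j. j \<le> i \<and> odd (a (Hj j) div 2 ^ b)}" by simp
    also have "\<dots> = (\<Sum>j\<le>i. if odd (a (Hj j) div 2 ^ b) then 1 else 0)" by (rule card_le_sum)
    also have "\<dots> = (\<Sum>j\<le>i. a (Hj j) div 2 ^ b mod 2)"
      by (intro sum.cong refl) (auto simp: odd_iff_mod_2_eq_one even_iff_mod_2_eq_zero)
    finally show ?thesis .
  qed
  have "(\<Sum>b<kb. 2 ^ b * (\<Sum>j\<le>i. a (Hj j) div 2 ^ b mod 2)) = (\<Sum>j\<le>i. \<Sum>b<kb. 2 ^ b * (a (Hj j) div 2 ^ b mod 2))"
    by (simp add: sum_distrib_left sum.swap[of _ "{..<kb}"])
  also have "\<dots> = (\<Sum>j\<le>i. a (Hj j))"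
    using Hin ab by (intro sum.cong refl) (simp add: bit_decomp)
  finally have s: "(\<Sum>b<kb. 2 ^ b * (\<Sum>j\<le>i. a (Hj j) div 2 ^ b mod 2)) = (\<Sum>j\<le>i. a (Hj j))" .
  have "sum_list (map (\<lambda>b. 2 ^ b * card {j. j \<le> i \<and> satr env w j (BitSet vs r a b)}) [0..<kb])
     = sum_list (map (\<lambda>b. 2 ^ b * (\<Sum>j\<le>i. a (Hj j) div 2 ^ b mod 2)) [0..<kb])"
    by (simp only: cnt)
  also have "\<dots> = (\<Sum>b<kb. 2 ^ b * (\<Sum>j\<le>i. a (Hj j) div 2 ^ b mod 2))"
    by (rule sum_list_upt_lt)
  finally have "sum_list (map (\<lambda>b. 2 ^ b * card {j. j \<le> i \<and> satr env w j (BitSet vs r a b)}) [0..<kb]) = (\<Sum>j\<le>i. a (Hj j))"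
    using s by simp
  moreover have "map (\<lambda>(a, n). a * n) (map (map_prod id (tvalr env w i)) ((1, Const cz) # map (\<lambda>b. (2 ^ b, Cnt (BitSet vs r a b))) [0..<kb]))
     = cz # map (\<lambda>b. 2 ^ b * card {j. j \<le> i \<and> satr env w j (BitSet vs r a b)}) [0..<kb]"
    by (simp only: list.map map_map o_def map_prod_simp id_apply tvalr.simps case_prod_conv mult_1)
  ultimately show ?thesis by (simp only: TestF_def satr.simps sum_list.Cons)
qed

lemma fsize_TestF:
  assumes "c0 < 2 ^ E" "u < 2 ^ E"
  shows "fsize (TestF vs r kb a c0 cmp u) \<le> 2 * E + 5 + kb * (kb + 5 * length vs + 5)"
proof -
  let ?f = "\<lambda>b. 1 + bitlen (2 ^ b) + (1 + fsize (BitSet vs r a b))"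
  have "?f b \<le> kb + 5 * length vs + 5" if "b < kb" for b
    using bitlen_pow2[of b] that fsize_BitSet[of vs r a b] by simp
  then have "sum_list (map ?f [0..<kb]) \<le> length [0..<kb] * (kb + 5 * length vs + 5)"
    by (intro sum_list_le_len) auto
  moreover have "bitlen c0 \<le> E + 1" "bitlen u \<le> E + 1" using assms bitlen_le by auto
  moreover have "bitlen 1 = 1" by (simp add: bitlen.simps)
  moreover have "fsize (TestF vs r kb a c0 cmp u) = 1 + bitlen 1 + bitlen c0 + sum_list (map ?f [0..<kb]) + 1 + bitlen u"
    unfolding TestF_def fsize.simps list.map map_map o_def
    by (simp only: map_prod_simp id_apply case_prod_conv tsize.simps sum_list.Cons)
  ultimately show ?thesis by simp
qed


section \<open>Fixed precision arithmetic\<close>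

lemma Fnum_alt: "Fnum p s = (\<lambda>m. real_of_int m / 2 ^ s) ` {-(2 ^ (p - 1))..<2 ^ (p - 1)}"
  unfolding Fnum_def by auto

lemma finite_Fnum[simp]: "finite (Fnum p s)"
  unfolding Fnum_alt by simp

lemma zero_Fnum[simp]: "0 \<in> Fnum p s"
  unfolding Fnum_def by (rule CollectI, rule exI[of _ 0]) simp

lemma Fnum_nonempty[simp]: "Fnum p s \<noteq> {}"
  using zero_Fnum by blast

lemma card_Fnum: assumes "p \<ge> 1" shows "card (Fnum p s) \<le> 2 ^ p"
proof -
  have "card (Fnum p s) \<le> card {-(2 ^ (p - 1))..<(2::int) ^ (p - 1)}"
    unfolding Fnum_alt by (rule card_image_le) simp
  also have "\<dots> = nat (2 ^ (p - 1) + 2 ^ (p - 1))" by simp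
  also have "\<dots> \<le> 2 ^ p"
  proof (cases p)
    case 0 then show ?thesis using \<open>p \<ge> 1\<close> by simp
  next
    case (Suc q)
    have "(2::int) ^ q + 2 ^ q = int (2 ^ Suc q)" by simp
    then show ?thesis using Suc by (simp only: diff_Suc_1 nat_int)
  qed
  finally show ?thesis .
qed

lemma Fnum_elem: "y \<in> Fnum p s \<Longrightarrow> \<exists>m::int. y = real_of_int m / 2 ^ s \<and> -(2 ^ (p - 1)) \<le> m \<and> m < 2 ^ (p - 1)"
  unfolding Fnum_def by auto

definition fint :: "nat \<Rightarrow> real \<Rightarrow> int" where
  "fint s y = \<lfloor>y * 2 ^ s\<rfloor>"

lemma fint_Fnum:
  assumes "y \<in> Fnum p s"
  shows "y = real_of_int (fint s y) / 2 ^ s" "-(2 ^ (p - 1)) \<le> fint s y" "fint s y < 2 ^ (p - 1)"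
proof -
  obtain m :: int where m: "y = m / 2 ^ s" "-(2 ^ (p - 1)) \<le> m" "m < 2 ^ (p - 1)"
    using Fnum_elem[OF assms] by blast
  have "fint s y = m" using m(1) by (simp add: fint_def)
  then show "y = real_of_int (fint s y) / 2 ^ s" "-(2 ^ (p - 1)) \<le> fint s y" "fint s y < 2 ^ (p - 1)"
    using m by auto
qed

lemma rnd_cases: "rnd p s x = (if \<exists>y\<in>Fnum p s. y \<le> x then Max {y \<in> Fnum p s. y \<le> x} else Min (Fnum p s))"
  by (simp add: rnd_def)

lemma rnd_in: "rnd p s x \<in> Fnum p s"
proof (cases "\<exists>y\<in>Fnum p s. y \<le> x")
  case True
  then have "Max {y \<in> Fnum p s. y \<le> x} \<in> {y \<in> Fnum p s. y \<le> x}"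
    by (intro Max_in) auto
  then show ?thesis using True by (simp add: rnd_def)
next
  case False
  then show ?thesis by (simp add: rnd_def)
qed

lemma rnd_ge: "y \<in> Fnum p s \<Longrightarrow> y \<le> x \<Longrightarrow> y \<le> rnd p s x"
proof -
  assume h: "y \<in> Fnum p s" "y \<le> x"
  then have "y \<le> Max {y \<in> Fnum p s. y \<le> x}" by (intro Max_ge) auto
  then show ?thesis using h by (auto simp: rnd_def)
qed

lemma rnd_le: "y \<in> Fnum p s \<Longrightarrow> y \<le> x \<Longrightarrow> rnd p s x \<le> x"
proof -
  assume h: "y \<in> Fnum p s" "y \<le> x"
  then have "Max {y \<in> Fnum p s. y \<le> x} \<in> {y \<in> Fnum p s. y \<le> x}"
    by (intro Max_in) auto
  then show ?thesis using h by (auto simp: rnd_def)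
qed

lemma rnd_nonneg: "0 \<le> x \<Longrightarrow> 0 \<le> rnd p s x"
  by (rule rnd_ge) auto

lemma rnd_small:
  assumes "0 \<le> x" "x < 1 / 2 ^ s"
  shows "rnd p s x = 0"
proof -
  have a: "0 \<le> rnd p s x" using assms rnd_nonneg by blast
  have b: "rnd p s x \<le> x" using assms by (intro rnd_le[of 0]) auto
  obtain m :: int where m: "rnd p s x = m / 2 ^ s" using Fnum_elem[OF rnd_in] by blast
  have "m / 2 ^ s < 1 / 2 ^ s" using b assms m by simp
  then have "real_of_int m < 1" by (simp add: divide_less_cancel)
  then have "m < 1" by simp
  moreover have "0 \<le> m"
  proof -
    have "real_of_int m = rnd p s x * 2 ^ s" using m by simp
    then have "0 \<le> real_of_int m" using a by simp
    then show ?thesis by simp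
  qed
  ultimately have "m = 0" by simp
  then show ?thesis using m by simp
qed

lemma rnd_zero[simp]: "rnd p s 0 = 0"
  by (rule rnd_small) auto

lemma rnd_p1:
  assumes "p = 1" "0 \<le> x"
  shows "rnd p s x = 0"
proof -
  have a: "0 \<le> rnd p s x" using assms rnd_nonneg by blast
  obtain m :: int where m: "rnd p s x = m / 2 ^ s" "m < 2 ^ (p - 1)" using Fnum_elem[OF rnd_in] by blast
  then have "m \<le> 0" using assms by simp
  then have "rnd p s x \<le> 0" using m by (simp add: divide_nonpos_pos)
  then show ?thesis using a by simp
qed

lemma card_Fvec: assumes "p \<ge> 1" shows "card (Fvec p s d) \<le> 2 ^ (p * d)"
proof -
  have "Fvec p s d = {xs. set xs \<subseteq> Fnum p s \<and> length xs = d}" by (auto simp: Fvec_def)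
  then have "card (Fvec p s d) = card (Fnum p s) ^ d" by (simp add: card_lists_length_eq)
  also have "\<dots> \<le> (2 ^ p) ^ d" using \<open>p \<ge> 1\<close> by (intro power_mono card_Fnum) simp_all
  finally show ?thesis by (simp add: power_mult)
qed

lemma finite_Fvec[simp]: "finite (Fvec p s d)"
proof -
  have "Fvec p s d = {xs. set xs \<subseteq> Fnum p s \<and> length xs = d}" by (auto simp: Fvec_def)
  then show ?thesis by (simp add: finite_lists_length_eq)
qed

section \<open>Transformer semantics\<close>

definition escore :: "nat \<Rightarrow> nat \<Rightarrow> vecfun \<Rightarrow> vecfun \<Rightarrow> real list \<Rightarrow> real list \<Rightarrow> real" where
  "escore p s WQ WK x y = rnd p s (exp (dotp (WQ x) (WK y)))"

definition attn :: "nat \<Rightarrow> nat \<Rightarrow> nat \<Rightarrow> vecfun \<Rightarrow> vecfun \<Rightarrow> vecfun \<Rightarrow> real list list \<Rightarrow> nat \<Rightarrow> real list" where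
  "attn p s d WQ WK WV H j = map (\<lambda>t. rnd p s (\<Sum>j'\<le>j. rnd p s (escore p s WQ WK (H ! j) (H ! j')
       / (\<Sum>j''\<le>j. escore p s WQ WK (H ! j) (H ! j''))) * (WV (H ! j') ! t))) [0..<d]"

lemma length_layer_apply[simp]: "length (layer_apply p s d lay H) = length H"
  by (cases lay) (simp add: layer_apply_def Let_def)

lemma layer_nth:
  "j < length H \<Longrightarrow> layer_apply p s d (WQ, WK, WV, f) H ! j = f (map2 (+) (attn p s d WQ WK WV H j) (H ! j))"
  by (simp add: layer_apply_def Let_def attn_def escore_def)

lemma attn_cong: "(\<forall>j'\<le>j. H ! j' = H' ! j') \<Longrightarrow> attn p s d WQ WK WV H j = attn p s d WQ WK WV H' j"
  unfolding attn_def by (intro map_cong refl arg_cong[where f="rnd p s"] sum.cong) auto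

lemma length_attn[simp]: "length (attn p s d WQ WK WV H j) = d"
  by (simp add: attn_def)

definition hid :: "nat \<Rightarrow> nat \<Rightarrow> nat \<Rightarrow> transformer \<Rightarrow> nat \<Rightarrow> nat option list \<Rightarrow> real list list" where
  "hid p s d T l u = foldl (\<lambda>H lay. layer_apply p s d lay H) (map (emb T) u) (take l (layers T))"

lemma hid_0: "hid p s d T 0 u = map (emb T) u"
  by (simp add: hid_def)

lemma hid_Suc: "l < length (layers T) \<Longrightarrow> hid p s d T (Suc l) u = layer_apply p s d (layers T ! l) (hid p s d T l u)"
  by (simp add: hid_def take_Suc_conv_app_nth)

lemma hidden_hid: "hidden p s d T u = hid p s d T (tdepth T) u"
  by (simp add: hid_def hidden_def tdepth_def)

lemma length_hid[simp]: "length (hid p s d T l u) = length u"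
proof (induction l)
  case 0 then show ?case by (simp add: hid_0)
next
  case (Suc l)
  show ?case
  proof (cases "l < length (layers T)")
    case True then show ?thesis using Suc by (simp add: hid_Suc)
  next
    case False
    then have "take (Suc l) (layers T) = take l (layers T)" by simp
    then show ?thesis using Suc by (simp add: hid_def)
  qed
qed

lemma hid_beyond: "length (layers T) \<le> l \<Longrightarrow> hid p s d T l u = hid p s d T (length (layers T)) u"
  by (simp add: hid_def)

lemma hid_bos: "hid p s d T l (None # ws) ! 0 = hid p s d T l [None] ! 0"
proof (induction l)
  case 0 then show ?case by (simp add: hid_0)
next
  case (Suc l)
  show ?case
  proof (cases "l < length (layers T)")
    case True
    obtain WQ WK WV f where lay: "layers T ! l = (WQ, WK, WV, f)" by (cases "layers T ! l") auto
    have "attn p s d WQ WK WV (hid p s d T l (None # ws)) 0 = attn p s d WQ WK WV (hid p s d T l [None]) 0"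
      using Suc by (intro attn_cong) auto
    then show ?thesis using True Suc by (simp add: hid_Suc lay layer_nth)
  next
    case False
    then show ?thesis using Suc by (simp add: hid_beyond[of T "Suc l"] hid_beyond[of T l])
  qed
qed


lemma prog_formula_nth: "P \<noteq> [] \<Longrightarrow> prog_formula P = expand_lines P ! (length P - 1)"
proof -
  assume "P \<noteq> []"
  then have "expand_lines P \<noteq> []" using length_expand[of P] by (metis length_0_conv)
  then show ?thesis by (simp add: prog_formula_def last_conv_nth)
qed

lemma sat_prog:
  assumes "wf_prog P"
  shows "sat w i (prog_formula P) = satr (\<lambda>m j. sat w j (expand_lines P ! m)) w i (P ! (length P - 1))"
proof -
  have "P \<noteq> []" using assms by (simp add: wf_prog_def)
  then show ?thesis using assms by (simp add: prog_formula_nth expand_sat)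
qed

lemma expand_depth:
  assumes "wf_prog P" "n < length P" "\<forall>m\<in>refs (P ! n). fdepth (expand_lines P ! m) \<le> D"
  shows "fdepth (expand_lines P ! n) \<le> fdepth (P ! n) + D"
proof -
  have r: "\<forall>m\<in>refs (P ! n). m < n" using assms unfolding wf_prog_def by blast
  have "fdepth (expand_lines P ! n) = fdepth (subst (expand_lines (take n P)) (P ! n))"
    using assms by (simp add: expand_nth)
  also have "\<dots> \<le> fdepth (P ! n) + D"
  proof (rule depth_subst)
    show "\<forall>m\<in>refs (P ! n). m < length (expand_lines (take n P)) \<and> fdepth (expand_lines (take n P) ! m) \<le> D"
      using r assms by (auto simp: expand_take[symmetric])
  qed
  finally show ?thesis .
qed

lemma map2_zero: "length h = d \<Longrightarrow> map2 (+) (map (\<lambda>t. 0::real) [0..<d]) h = h"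
  by (rule nth_equalityI) auto

locale tsetup =
  fixes \<Sigma> :: "nat set" and p s d :: nat and T :: transformer
  assumes finS: "finite \<Sigma>" and neS: "\<Sigma> \<noteq> {}" and p1: "p \<ge> 1" and sp: "s \<le> p" and d1: "d \<ge> 1"
    and wf: "wf_transformer \<Sigma> p s d T"
begin

abbreviation "V \<equiv> Fvec p s d"
abbreviation "L \<equiv> length (layers T)"

lemma wf_emb: "a \<in> insert None (Some ` \<Sigma>) \<Longrightarrow> emb T a \<in> V"
  using wf unfolding wf_transformer_def by blast

lemma wf_layer:
  assumes "l < L" "layers T ! l = (WQ, WK, WV, f)"
  shows "\<forall>x\<in>V. WQ x \<in> V \<and> WK x \<in> V \<and> WV x \<in> V" "\<forall>x. length x = d \<longrightarrow> f x \<in> V"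
proof -
  have "(WQ, WK, WV, f) \<in> set (layers T)" using assms by (metis nth_mem)
  then show "\<forall>x\<in>V. WQ x \<in> V \<and> WK x \<in> V \<and> WV x \<in> V" "\<forall>x. length x = d \<longrightarrow> f x \<in> V"
    using wf unfolding wf_transformer_def by fastforce+
qed

lemma wf_out: "x \<in> V \<Longrightarrow> wout T x \<in> Fnum p s"
  using wf unfolding wf_transformer_def by blast

lemma Fvec_len: "x \<in> V \<Longrightarrow> length x = d"
  by (simp add: Fvec_def)

lemma Fvec_nth: "x \<in> V \<Longrightarrow> t < length x \<Longrightarrow> x ! t \<in> Fnum p s"
  by (auto simp: Fvec_def)

lemma attn_in_V: "attn p s d WQ WK WV H j \<in> V"
  by (auto simp: Fvec_def attn_def rnd_in)

lemma hid_in_V: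
  assumes "set u \<subseteq> insert None (Some ` \<Sigma>)" "j < length u"
  shows "hid p s d T l u ! j \<in> V"
proof (induction l)
  case 0
  have "u ! j \<in> insert None (Some ` \<Sigma>)" using assms nth_mem by blast
  then show ?case using assms wf_emb by (simp add: hid_0)
next
  case (Suc l)
  show ?case
  proof (cases "l < L")
    case True
    obtain WQ WK WV f where lay: "layers T ! l = (WQ, WK, WV, f)" by (cases "layers T ! l") auto
    have "length (map2 (+) (attn p s d WQ WK WV (hid p s d T l u) j) (hid p s d T l u ! j)) = d"
      using Suc Fvec_len by simp
    then show ?thesis using True lay wf_layer(2)[OF True lay] assms
      by (simp add: hid_Suc layer_nth)
  next
    case False
    then show ?thesis using Suc by (simp add: hid_beyond[of T "Suc l"] hid_beyond[of T l])
  qed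
qed

section \<open>The case p = 1\<close>

lemma attn_p1: "p = 1 \<Longrightarrow> attn p s d WQ WK WV H j = map (\<lambda>t. 0) [0..<d]"
proof -
  assume "p = 1"
  then have "escore p s WQ WK x y = 0" for x y by (simp add: escore_def rnd_p1)
  then show ?thesis by (simp add: attn_def)
qed

fun G :: "nat \<Rightarrow> nat option \<Rightarrow> real list" where
  "G 0 a = emb T a"
| "G (Suc l) a = (if l < L then snd (snd (snd (layers T ! l))) (G l a) else G l a)"

lemma hid_p1:
  assumes "p = 1" "set u \<subseteq> insert None (Some ` \<Sigma>)" "j < length u"
  shows "hid p s d T l u ! j = G l (u ! j)"
proof (induction l)
  case 0 then show ?case using assms by (simp add: hid_0)
next
  case (Suc l)
  show ?case
  proof (cases "l < L")
    case True
    obtain WQ WK WV f where lay: "layers T ! l = (WQ, WK, WV, f)" by (cases "layers T ! l") auto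
    have "length (hid p s d T l u ! j) = d" using hid_in_V[OF assms(2,3)] Fvec_len by blast
    moreover have "attn p s d WQ WK WV (hid p s d T l u) j = map (\<lambda>t. 0) [0..<d]"
      using attn_p1[OF assms(1)] .
    ultimately show ?thesis using True lay Suc assms(2,3)
      by (simp add: hid_Suc layer_nth map2_zero)
  next
    case False
    then show ?thesis using Suc by (simp add: hid_beyond[of T "Suc l"] hid_beyond[of T l])
  qed
qed

definition P1 :: "form list" where
  "P1 = [ORL (map Sym (filter (\<lambda>a. 0 < wout T (G L (Some a))) (sorted_list_of_set \<Sigma>)))]"

lemma P1_wf: "wf_prog P1"
  by (auto simp: wf_prog_def P1_def)

lemma P1_sim: "p = 1 \<Longrightarrow> simulates \<Sigma> p s d T P1"
proof -
  assume p: "p = 1"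
  show ?thesis unfolding simulates_def
  proof (intro allI impI)
    fix w i assume w: "set w \<subseteq> \<Sigma>" and i: "i < length w"
    let ?u = "None # map Some w"
    have su: "set ?u \<subseteq> insert None (Some ` \<Sigma>)" using w by auto
    have "tout p s d T ?u (Suc i) = wout T (G L (Some (w ! i)))"
      using hid_p1[OF p su, of "Suc i" L] i by (simp add: tout_def hidden_hid tdepth_def)
    moreover have "sat w i (prog_formula P1) = (w ! i \<in> \<Sigma> \<and> 0 < wout T (G L (Some (w ! i))))"
      using sat_prog[OF P1_wf, of w i] finS by (auto simp: P1_def)
    ultimately show "sat w i (prog_formula P1) = (0 < tout p s d T ?u (Suc i))"
      using w i by auto
  qed
qed

lemma P1_size: "prog_size P1 \<le> 7 * card \<Sigma>"
proof -
  have "fsize (ORL (map Sym (filter (\<lambda>a. 0 < wout T (G L (Some a))) (sorted_list_of_set \<Sigma>))))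
     \<le> length (map Sym (filter (\<lambda>a. 0 < wout T (G L (Some a))) (sorted_list_of_set \<Sigma>))) * (1 + 4) + 2"
    by (rule fsize_ORL) auto
  moreover have "length (filter (\<lambda>a. 0 < wout T (G L (Some a))) (sorted_list_of_set \<Sigma>)) \<le> card \<Sigma>"
    using length_filter_le[of _ "sorted_list_of_set \<Sigma>"] by simp
  moreover have "card \<Sigma> \<ge> 1" using finS neS by (simp add: Suc_le_eq card_gt_0_iff)
  ultimately show ?thesis by (simp add: prog_size_def P1_def)
qed

lemma P1_depth: "prog_depth P1 = 0"
proof -
  have "fdepth (expand_lines P1 ! 0) \<le> fdepth (P1 ! 0) + 0"
    by (rule expand_depth[OF P1_wf]) (auto simp: P1_def)
  moreover have "fdepth (P1 ! 0) = 0"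
    unfolding P1_def by (simp, rule le_zero_eq[THEN iffD1], rule fdepth_ORL) auto
  ultimately show ?thesis by (simp add: prog_depth_def prog_formula_nth P1_def)
qed

lemma P1_prec: "prog_precision P1 = 1"
  by (simp add: prog_precision_def P1_def bitlen.simps)

lemma P1_girth: "prog_girth P1 = 0"
proof -
  have "fgirth (ORL (map Sym (filter (\<lambda>a. 0 < wout T (G L (Some a))) (sorted_list_of_set \<Sigma>)))) \<le> 0"
    by (rule fgirth_ORL) auto
  then show ?thesis by (simp add: prog_girth_def P1_def)
qed

end


context tsetup begin

definition vs :: "real list list" where "vs = (SOME l. distinct l \<and> set l = V)"
definition N :: nat where "N = length vs"

lemma vs_props: "distinct vs" "set vs = V"
proof -
  obtain l where "set l = V" "distinct l" using finite_distinct_list[OF finite_Fvec] by blast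
  then have "distinct l \<and> set l = V" by simp
  then have "distinct vs \<and> set vs = V" unfolding vs_def by (rule someI)
  then show "distinct vs" "set vs = V" by auto
qed

lemma N_card: "N = card V"
  using vs_props distinct_card unfolding N_def by metis

lemma zero_vec_V: "map (\<lambda>t. 0) [0..<d] \<in> V"
  by (auto simp: Fvec_def)

lemma N_pos: "N \<ge> 1"
proof -
  have "V \<noteq> {}" using zero_vec_V by blast
  then show ?thesis using N_card by (simp add: Suc_le_eq card_gt_0_iff)
qed

lemma N_le: "N \<le> 2 ^ (p * d)"
  using N_card card_Fvec[OF p1] by simp

definition lq :: "nat \<Rightarrow> vecfun" where "lq l = fst (layers T ! l)"
definition lk :: "nat \<Rightarrow> vecfun" where "lk l = fst (snd (layers T ! l))"
definition lv :: "nat \<Rightarrow> vecfun" where "lv l = fst (snd (snd (layers T ! l)))"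
definition lf :: "nat \<Rightarrow> vecfun" where "lf l = snd (snd (snd (layers T ! l)))"

lemma lay_eq: "layers T ! l = (lq l, lk l, lv l, lf l)"
  by (simp add: lq_def lk_def lv_def lf_def)

definition bos :: "nat \<Rightarrow> real list" where "bos l = hid p s d T l [None] ! 0"

definition Ev :: "nat \<Rightarrow> real list \<Rightarrow> real list \<Rightarrow> nat" where
  "Ev l x y = nat (fint s (escore p s (lq l) (lk l) x y))"

definition Kmax :: nat where "Kmax = 2 ^ (s + p)"
definition U :: nat where "U = 2 ^ (4 * p)"
definition kb :: nat where "kb = 2 * p"

definition alK :: "nat \<Rightarrow> real list \<Rightarrow> nat \<Rightarrow> real list \<Rightarrow> real" where
  "alK l x K y = rnd p s (real (Ev l x y) / real K)"

definition gv :: "nat \<Rightarrow> real list \<Rightarrow> nat \<Rightarrow> nat \<Rightarrow> real list \<Rightarrow> int" where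
  "gv l x K t y = fint s (alK l x K y) * fint s (lv l y ! t)"

definition gp :: "nat \<Rightarrow> real list \<Rightarrow> nat \<Rightarrow> nat \<Rightarrow> real list \<Rightarrow> nat" where
  "gp l x K t y = nat (gv l x K t y)"
definition gn :: "nat \<Rightarrow> real list \<Rightarrow> nat \<Rightarrow> nat \<Rightarrow> real list \<Rightarrow> nat" where
  "gn l x K t y = nat (- gv l x K t y)"

lemma escore_Ev: "escore p s (lq l) (lk l) x y = real (Ev l x y) / 2 ^ s" "Ev l x y < 2 ^ (p - 1)"
proof -
  let ?e = "escore p s (lq l) (lk l) x y"
  have F: "?e \<in> Fnum p s" by (simp add: escore_def rnd_in)
  have nn: "0 \<le> ?e" by (simp add: escore_def rnd_nonneg)
  have e: "?e = real_of_int (fint s ?e) / 2 ^ s" "fint s ?e < 2 ^ (p - 1)" using fint_Fnum[OF F] by auto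
  have "0 \<le> real_of_int (fint s ?e)"
  proof -
    have "real_of_int (fint s ?e) = ?e * 2 ^ s" using e(1) by (simp add: field_simps)
    then show ?thesis using nn by simp
  qed
  then have "0 \<le> fint s ?e" by simp
  then show "?e = real (Ev l x y) / 2 ^ s" "Ev l x y < 2 ^ (p - 1)"
    using e by (auto simp: Ev_def nat_less_iff)
qed

lemma fint_abs: "a \<in> Fnum p s \<Longrightarrow> \<bar>fint s a\<bar> \<le> 2 ^ (p - 1)"
  using fint_Fnum[of a p s] by auto

lemma fint_zero[simp]: "fint s 0 = 0"
  by (simp add: fint_def)

lemma gv_bound:
  assumes "l < L" "y \<in> V" "t < d"
  shows "\<bar>gv l x K t y\<bar> \<le> 2 ^ (p - 1) * 2 ^ (p - 1)"
proof -
  have "lv l y \<in> V" using wf_layer(1)[OF assms(1) lay_eq] assms(2) by blast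
  then have "lv l y ! t \<in> Fnum p s" using assms(3) Fvec_len Fvec_nth by simp
  then have a: "\<bar>fint s (lv l y ! t)\<bar> \<le> 2 ^ (p - 1)" by (rule fint_abs)
  have b: "\<bar>fint s (alK l x K y)\<bar> \<le> 2 ^ (p - 1)" by (rule fint_abs) (simp add: alK_def rnd_in)
  have "\<bar>gv l x K t y\<bar> = \<bar>fint s (alK l x K y)\<bar> * \<bar>fint s (lv l y ! t)\<bar>"
    by (simp add: gv_def abs_mult)
  also have "\<dots> \<le> 2 ^ (p - 1) * 2 ^ (p - 1)" using a b by (intro mult_mono) auto
  finally show ?thesis .
qed

lemma gv_zero: "Ev l x y = 0 \<Longrightarrow> gv l x K t y = 0"
  by (simp add: gv_def alK_def)

definition Gb :: nat where "Gb = 2 ^ (p - 1) * 2 ^ (p - 1)"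

lemma Gb_lt: "Gb < 2 ^ kb"
proof -
  have "Gb = 2 ^ (2 * p - 2)" using p1 by (simp add: Gb_def power_add[symmetric])
  also have "\<dots> < 2 ^ (2 * p)" using p1 by (intro power_strict_increasing) auto
  finally show ?thesis by (simp add: kb_def)
qed

lemma gp_gn_bound:
  assumes "l < L" "y \<in> V" "t < d"
  shows "gp l x K t y \<le> Gb * Ev l x y" "gn l x K t y \<le> Gb * Ev l x y"
    "gp l x K t y \<le> Gb" "gn l x K t y \<le> Gb"
proof -
  have b: "\<bar>gv l x K t y\<bar> \<le> int Gb" using gv_bound[OF assms] by (simp add: Gb_def)
  show g1: "gp l x K t y \<le> Gb" "gn l x K t y \<le> Gb" using b by (auto simp: gp_def gn_def)
  show "gp l x K t y \<le> Gb * Ev l x y" "gn l x K t y \<le> Gb * Ev l x y"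
  proof -
    have "gp l x K t y \<le> Gb * Ev l x y \<and> gn l x K t y \<le> Gb * Ev l x y"
    proof (cases "Ev l x y = 0")
      case True then show ?thesis by (simp add: gp_def gn_def gv_zero)
    next
      case False
      then have "Gb \<le> Gb * Ev l x y" by simp
      then show ?thesis using g1 by linarith
    qed
    then show "gp l x K t y \<le> Gb * Ev l x y" "gn l x K t y \<le> Gb * Ev l x y" by auto
  qed
qed

lemma alK_mult:
  assumes "l < L" "y \<in> V" "t < d"
  shows "alK l x K y * (lv l y ! t) = real_of_int (gv l x K t y) / 2 ^ (2 * s)"
proof -
  have "lv l y \<in> V" using wf_layer(1)[OF assms(1) lay_eq] assms(2) by blast
  then have F: "lv l y ! t \<in> Fnum p s" using assms(3) Fvec_len Fvec_nth by simp
  have A: "alK l x K y \<in> Fnum p s" by (simp add: alK_def rnd_in)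
  have "alK l x K y * (lv l y ! t) = (real_of_int (fint s (alK l x K y)) / 2 ^ s) * (real_of_int (fint s (lv l y ! t)) / 2 ^ s)"
    using fint_Fnum(1)[OF A] fint_Fnum(1)[OF F] by metis
  also have "\<dots> = real_of_int (gv l x K t y) / 2 ^ (2 * s)"
    by (simp add: gv_def mult_2 power_add)
  finally show ?thesis .
qed

lemma gv_split: "real_of_int (gv l x K t y) = real (gp l x K t y) - real (gn l x K t y)"
  by (simp add: gp_def gn_def)

subsection \<open>Attention in terms of counts\<close>

definition Bn :: "nat \<Rightarrow> real list list \<Rightarrow> nat \<Rightarrow> nat" where
  "Bn l H i = Ev l (H ! Suc i) (H ! 0) + (\<Sum>j\<le>i. Ev l (H ! Suc i) (H ! Suc j))"

definition Pp :: "nat \<Rightarrow> real list list \<Rightarrow> nat \<Rightarrow> nat \<Rightarrow> nat \<Rightarrow> nat" where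
  "Pp l H i K t = gp l (H ! Suc i) K t (H ! 0) + (\<Sum>j\<le>i. gp l (H ! Suc i) K t (H ! Suc j))"
definition Nn :: "nat \<Rightarrow> real list list \<Rightarrow> nat \<Rightarrow> nat \<Rightarrow> nat \<Rightarrow> nat" where
  "Nn l H i K t = gn l (H ! Suc i) K t (H ! 0) + (\<Sum>j\<le>i. gn l (H ! Suc i) K t (H ! Suc j))"

lemma attn_formula:
  "attn p s d (lq l) (lk l) (lv l) H (Suc i) ! t =
     rnd p s (\<Sum>j'\<le>Suc i. alK l (H ! Suc i) (Bn l H i) (H ! j') * (lv l (H ! j') ! t))" if "t < d"
proof -
  let ?x = "H ! Suc i"
  have den: "(\<Sum>j''\<le>Suc i. escore p s (lq l) (lk l) ?x (H ! j'')) = real (Bn l H i) / 2 ^ s"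
  proof -
    have "(\<Sum>j''\<le>Suc i. escore p s (lq l) (lk l) ?x (H ! j'')) = escore p s (lq l) (lk l) ?x (H ! 0) + (\<Sum>j\<le>i. escore p s (lq l) (lk l) ?x (H ! Suc j))"
      by (rule sum.atMost_Suc_shift)
    also have "\<dots> = real (Ev l ?x (H ! 0)) / 2 ^ s + (\<Sum>j\<le>i. real (Ev l ?x (H ! Suc j)) / 2 ^ s)"
      by (simp only: escore_Ev(1))
    also have "\<dots> = real (Bn l H i) / 2 ^ s"
      by (simp add: Bn_def add_divide_distrib sum_divide_distrib)
    finally show ?thesis .
  qed
  have "rnd p s (escore p s (lq l) (lk l) ?x (H ! j') / (\<Sum>j''\<le>Suc i. escore p s (lq l) (lk l) ?x (H ! j'')))
      = alK l ?x (Bn l H i) (H ! j')" for j'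
    by (subst den) (simp add: escore_Ev(1) alK_def)
  then show ?thesis using that by (simp add: attn_def)
qed

lemma attn_big:
  assumes "t < d" "Kmax \<le> Bn l H i"
  shows "attn p s d (lq l) (lk l) (lv l) H (Suc i) ! t = 0"
proof -
  have "alK l x (Bn l H i) y = 0" for x y
  proof -
    have e: "Ev l x y < 2 ^ p"
      using escore_Ev(2)[of l x y] by (meson diff_le_self le_less_trans one_less_numeral_iff power_increasing_iff semiring_norm(76) not_le order.strict_trans1)
    have "real (Ev l x y) * 2 ^ s < 2 ^ p * 2 ^ s" using e by simp
    also have "\<dots> = real Kmax" by (simp add: Kmax_def power_add)
    also have "\<dots> \<le> real (Bn l H i)" using assms by simp
    finally have lt: "real (Ev l x y) * 2 ^ s < real (Bn l H i)" .
    have pos: "0 < real (Bn l H i)" using lt by (smt (verit) of_nat_0_le_iff zero_le_mult_iff zero_le_power)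
    have "real (Ev l x y) / real (Bn l H i) < 1 / 2 ^ s"
      using lt pos by (simp add: field_simps)
    then show ?thesis unfolding alK_def by (intro rnd_small) auto
  qed
  then show ?thesis using attn_formula[OF assms(1)] by simp
qed

lemma attn_small:
  assumes "l < L" "t < d" "\<forall>j\<le>Suc i. H ! j \<in> V"
  shows "attn p s d (lq l) (lk l) (lv l) H (Suc i) ! t =
     rnd p s ((real (Pp l H i (Bn l H i) t) - real (Nn l H i (Bn l H i) t)) / 2 ^ (2 * s))"
proof -
  let ?x = "H ! Suc i" and ?K = "Bn l H i"
  have "(\<Sum>j'\<le>Suc i. alK l ?x ?K (H ! j') * (lv l (H ! j') ! t))
      = (\<Sum>j'\<le>Suc i. (real (gp l ?x ?K t (H ! j')) - real (gn l ?x ?K t (H ! j'))) / 2 ^ (2 * s))"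
    using assms by (intro sum.cong refl) (simp add: alK_mult gv_split)
  also have "\<dots> = (real (Pp l H i ?K t) - real (Nn l H i ?K t)) / 2 ^ (2 * s)"
    by (simp add: sum_divide_distrib[symmetric] sum_subtractf sum.atMost_Suc_shift Pp_def Nn_def del: sum.atMost_Suc)
  finally show ?thesis using attn_formula[OF assms(2)] by simp
qed

lemma Pp_bound:
  assumes "l < L" "t < d" "\<forall>j\<le>Suc i. H ! j \<in> V"
  shows "Pp l H i K t \<le> Gb * Bn l H i" "Nn l H i K t \<le> Gb * Bn l H i"
proof -
  have a: "gp l (H ! Suc i) K t (H ! j) \<le> Gb * Ev l (H ! Suc i) (H ! j)"
          "gn l (H ! Suc i) K t (H ! j) \<le> Gb * Ev l (H ! Suc i) (H ! j)" if "j \<le> Suc i" for j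
    using gp_gn_bound[OF assms(1) _ assms(2)] assms(3) that by auto
  have "Pp l H i K t \<le> Gb * Ev l (H ! Suc i) (H ! 0) + (\<Sum>j\<le>i. Gb * Ev l (H ! Suc i) (H ! Suc j))"
    unfolding Pp_def using a by (intro add_mono sum_mono) auto
  then show "Pp l H i K t \<le> Gb * Bn l H i" by (simp add: Bn_def sum_distrib_left distrib_left)
  have "Nn l H i K t \<le> Gb * Ev l (H ! Suc i) (H ! 0) + (\<Sum>j\<le>i. Gb * Ev l (H ! Suc i) (H ! Suc j))"
    unfolding Nn_def using a by (intro add_mono sum_mono) auto
  then show "Nn l H i K t \<le> Gb * Bn l H i" by (simp add: Bn_def sum_distrib_left distrib_left)
qed

lemma GbKmax: "Gb * Kmax \<le> U"
proof -
  have "Gb * Kmax = 2 ^ (2 * p - 2 + (s + p))" using p1 by (simp add: Gb_def Kmax_def power_add[symmetric])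
  also have "\<dots> \<le> 2 ^ (4 * p)" using sp by (intro power_increasing) auto
  finally show ?thesis by (simp add: U_def)
qed

end


context tsetup begin

definition BigF :: "nat \<Rightarrow> real list \<Rightarrow> form" where
  "BigF l x = TestF vs (l * N) kb (Ev l x) (Ev l x (bos l)) Ge Kmax"
definition BEq :: "nat \<Rightarrow> real list \<Rightarrow> nat \<Rightarrow> form" where
  "BEq l x K = TestF vs (l * N) kb (Ev l x) (Ev l x (bos l)) Eq K"
definition PEq :: "nat \<Rightarrow> real list \<Rightarrow> nat \<Rightarrow> nat \<Rightarrow> nat \<Rightarrow> form" where
  "PEq l x K t u = TestF vs (l * N) kb (gp l x K t) (gp l x K t (bos l)) Eq u"
definition NEq :: "nat \<Rightarrow> real list \<Rightarrow> nat \<Rightarrow> nat \<Rightarrow> nat \<Rightarrow> form" where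
  "NEq l x K t v = TestF vs (l * N) kb (gn l x K t) (gn l x K t (bos l)) Eq v"

definition PairF :: "nat \<Rightarrow> real list \<Rightarrow> nat \<Rightarrow> nat \<Rightarrow> real \<Rightarrow> form" where
  "PairF l x K t m = ORL (map (\<lambda>(u, v). Conj (PEq l x K t u) (NEq l x K t v))
     (filter (\<lambda>(u, v). rnd p s ((real u - real v) / 2 ^ (2 * s)) = m) (List.product [0..<U] [0..<U])))"

definition CF :: "nat \<Rightarrow> real list \<Rightarrow> nat \<Rightarrow> real \<Rightarrow> form" where
  "CF l x t m = ORL ((if m = 0 then [BigF l x] else []) @ map (\<lambda>K. Conj (BEq l x K) (PairF l x K t m)) [0..<Kmax])"

definition LineS :: "nat \<Rightarrow> real list \<Rightarrow> form" where
  "LineS l y' = ORL (map (\<lambda>(k, c). Conj (Ref (l * N + k)) (ANDL (map (\<lambda>t. CF l (vs ! k) t (c ! t)) [0..<d])))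
     (filter (\<lambda>(k, c). lf l (map2 (+) c (vs ! k)) = y') (List.product [0..<N] vs)))"

definition Line0 :: "real list \<Rightarrow> form" where
  "Line0 y = ORL (map Sym (filter (\<lambda>a. emb T (Some a) = y) (sorted_list_of_set \<Sigma>)))"

definition Line :: "nat \<Rightarrow> form" where
  "Line n = (if n < N then Line0 (vs ! n) else LineS (n div N - 1) (vs ! (n mod N)))"

definition Out :: form where
  "Out = ORL (map (\<lambda>k. Ref (L * N + k)) (filter (\<lambda>k. 0 < wout T (vs ! k)) [0..<N]))"

definition PG :: "form list" where
  "PG = map Line [0..<Suc L * N] @ [Out]"

subsection \<open>Semantics of one layer\<close>

lemma Ev_lt_kb: "Ev l x y < 2 ^ kb"
proof -
  have "Ev l x y < 2 ^ (p - 1)" by (rule escore_Ev(2))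
  also have "(2::nat) ^ (p - 1) \<le> 2 ^ kb" by (intro power_increasing) (auto simp: kb_def)
  finally show ?thesis .
qed

lemma layer_sem:
  assumes l: "l < L" and w: "set w \<subseteq> \<Sigma>" and i: "i < length w"
    and env: "\<forall>j\<le>i. \<forall>k<N. env (l * N + k) j = (hid p s d T l (None # map Some w) ! Suc j = vs ! k)"
  shows "satr env w i (LineS l y') = (hid p s d T (Suc l) (None # map Some w) ! Suc i = y')"
proof -
  let ?u = "None # map Some w"
  define H where "H = hid p s d T l ?u"
  have su: "set ?u \<subseteq> insert None (Some ` \<Sigma>)" using w by auto
  have HV: "\<forall>j\<le>Suc i. H ! j \<in> V" using hid_in_V[OF su] i unfolding H_def by auto
  have H0: "H ! 0 = bos l" unfolding H_def bos_def by (rule hid_bos)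
  have envH: "\<forall>j\<le>i. \<forall>k<length vs. env (l * N + k) j = (H ! Suc j = vs ! k)"
    using env unfolding H_def N_def by simp
  have HinS: "\<forall>j\<le>i. H ! Suc j \<in> set vs" using HV vs_props by auto
  have T: "satr env w i (TestF vs (l * N) kb a (a (bos l)) cmp u) = cmp_sem cmp (a (H ! 0) + (\<Sum>j\<le>i. a (H ! Suc j))) u"
    if "\<forall>y\<in>V. a y < 2 ^ kb" for a cmp u
    using TestF_sem[where Hj="\<lambda>j. H ! Suc j" and a=a and kb=kb and cz="a (bos l)" and cmp=cmp and u=u
        and env=env and r="l * N" and i=i and vs=vs and w=w] envH HinS that vs_props H0 by simp
  let ?x = "H ! Suc i"
  have CFs: "satr env w i (CF l ?x t m) = (attn p s d (lq l) (lk l) (lv l) H (Suc i) ! t = m)" if t: "t < d" for t m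
  proof -
    have big: "satr env w i (BigF l ?x) = (Kmax \<le> Bn l H i)"
      unfolding BigF_def using T[of "Ev l ?x"] Ev_lt_kb by (simp add: Bn_def)
    have beq: "satr env w i (BEq l ?x K) = (Bn l H i = K)" for K
      unfolding BEq_def using T[of "Ev l ?x"] Ev_lt_kb by (simp add: Bn_def)
    have gpb: "\<forall>y\<in>V. gp l ?x K t y < 2 ^ kb" "\<forall>y\<in>V. gn l ?x K t y < 2 ^ kb" for K
      using gp_gn_bound(3,4)[OF l _ t] Gb_lt by (meson le_less_trans)+
    have peq: "satr env w i (PEq l ?x K t u) = (Pp l H i K t = u)" for K u
      unfolding PEq_def using T[OF gpb(1)] by (simp add: Pp_def)
    have neq: "satr env w i (NEq l ?x K t v) = (Nn l H i K t = v)" for K v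
      unfolding NEq_def using T[OF gpb(2)] by (simp add: Nn_def)
    have pair: "satr env w i (PairF l ?x K t m) = (Pp l H i K t < U \<and> Nn l H i K t < U \<and>
        rnd p s ((real (Pp l H i K t) - real (Nn l H i K t)) / 2 ^ (2 * s)) = m)" for K
      unfolding PairF_def by (auto simp: peq neq)
    show ?thesis
    proof (cases "Kmax \<le> Bn l H i")
      case True
      then have "satr env w i (CF l ?x t m) = (m = 0)"
        unfolding CF_def by (auto simp: big beq)
      then show ?thesis using attn_big[OF t True] by auto
    next
      case False
      have bnd: "Pp l H i (Bn l H i) t < U" "Nn l H i (Bn l H i) t < U"
      proof -
        have "Gb \<noteq> 0" by (simp add: Gb_def)
        then have "Gb * Bn l H i < Gb * Kmax" using False by simp
        then have "Gb * Bn l H i < U" using GbKmax by linarith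
        then show "Pp l H i (Bn l H i) t < U" "Nn l H i (Bn l H i) t < U"
          using Pp_bound[OF l t HV] by (auto intro: le_less_trans)
      qed
      have "satr env w i (CF l ?x t m) = satr env w i (PairF l ?x (Bn l H i) t m)"
      proof
        assume "satr env w i (CF l ?x t m)"
        then show "satr env w i (PairF l ?x (Bn l H i) t m)"
          unfolding CF_def using False by (auto simp: big beq)
      next
        assume a: "satr env w i (PairF l ?x (Bn l H i) t m)"
        have "Bn l H i \<in> {0..<Kmax}" using False by simp
        then show "satr env w i (CF l ?x t m)"
          unfolding CF_def using a by (auto simp: beq intro!: bexI[of _ "Conj (BEq l ?x (Bn l H i)) (PairF l ?x (Bn l H i) t m)"])
      qed
      then show ?thesis using pair bnd attn_small[OF l t HV] by simp
    qed
  qed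
  have hS: "hid p s d T (Suc l) ?u ! Suc i = lf l (map2 (+) (attn p s d (lq l) (lk l) (lv l) H (Suc i)) ?x)"
    using l i by (simp add: hid_Suc H_def lay_eq layer_nth)
  have attV: "attn p s d (lq l) (lk l) (lv l) H (Suc i) \<in> set vs" using attn_in_V vs_props by simp
  show ?thesis
  proof
    assume "satr env w i (LineS l y')"
    then obtain k c where kc: "k < N" "c \<in> set vs" "lf l (map2 (+) c (vs ! k)) = y'" "env (l * N + k) i"
      "\<forall>t<d. satr env w i (CF l (vs ! k) t (c ! t))"
      unfolding LineS_def by auto
    have xk: "?x = vs ! k" using env kc(1,4) unfolding H_def by auto
    have "c = attn p s d (lq l) (lk l) (lv l) H (Suc i)"
    proof (rule nth_equalityI)
      show "length c = length (attn p s d (lq l) (lk l) (lv l) H (Suc i))"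
        using kc(2) vs_props Fvec_len by auto
      fix t assume "t < length c"
      then have "t < d" using kc(2) vs_props Fvec_len by auto
      then show "c ! t = attn p s d (lq l) (lk l) (lv l) H (Suc i) ! t"
        using kc(5) CFs xk by metis
    qed
    then show "hid p s d T (Suc l) ?u ! Suc i = y'" using hS kc(3) xk by simp
  next
    assume y: "hid p s d T (Suc l) ?u ! Suc i = y'"
    obtain k where k: "k < N" "vs ! k = ?x" using HinS by (metis N_def in_set_conv_nth order_refl)
    have "env (l * N + k) i" using env k unfolding H_def by auto
    moreover have "\<forall>t<d. satr env w i (CF l (vs ! k) t (attn p s d (lq l) (lk l) (lv l) H (Suc i) ! t))"
      using CFs k by simp
    moreover have "lf l (map2 (+) (attn p s d (lq l) (lk l) (lv l) H (Suc i)) (vs ! k)) = y'"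
      using y hS k by simp
    ultimately have "\<exists>a<N. \<exists>b. b \<in> set vs \<and> lf l (map2 (+) b (vs ! a)) = y' \<and> env (l * N + a) i \<and>
        (\<forall>x\<in>{0..<d}. satr env w i (CF l (vs ! a) x (b ! x)))"
      using k attV by (intro exI[of _ k] conjI exI[of _ "attn p s d (lq l) (lk l) (lv l) H (Suc i)"]) auto
    then show "satr env w i (LineS l y')"
      unfolding LineS_def by auto
  qed
qed

end


lemma finite_fconsts: "finite (fconsts \<phi>)" "finite (tconsts t)"
  by (induction \<phi> and t) auto

context tsetup begin

lemma refs_PairF: "refs (PairF l x K t m) \<subseteq> {l * N..<l * N + N}"
  using refs_TestF[of vs "l * N"] unfolding PairF_def PEq_def NEq_def N_def by fastforce

lemma refs_CF: "refs (CF l x t m) \<subseteq> {l * N..<l * N + N}"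
  using refs_TestF[of vs "l * N"] refs_PairF[of l x _ t m] unfolding CF_def BigF_def BEq_def N_def
  by (fastforce split: if_splits)

lemma refs_LineS: "refs (LineS l y) \<subseteq> {l * N..<l * N + N}"
  using refs_CF[of l] unfolding LineS_def by fastforce

lemma refs_Line0: "refs (Line0 y) = {}"
  by (auto simp: Line0_def)

lemma refs_Out: "refs Out \<subseteq> {L * N..<L * N + N}"
  by (auto simp: Out_def)

lemma length_PG: "length PG = Suc (Suc L * N)"
  by (simp add: PG_def)

lemma PG_nth: "n < Suc L * N \<Longrightarrow> PG ! n = Line n"
  by (simp add: PG_def nth_append)

lemma PG_last: "PG ! (Suc L * N) = Out"
  by (simp add: PG_def nth_append)

lemma div_facts:
  assumes "N \<le> n" "n < Suc L * N"
  shows "n div N - 1 < L" "(n div N - 1) * N + N \<le> n" "1 \<le> n div N" "Suc (n div N - 1) = n div N"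
proof -
  have Np: "0 < N" using N_pos by simp
  have "N div N \<le> n div N" using assms(1) by (rule div_le_mono)
  then show "1 \<le> n div N" using Np by simp
  then show "Suc (n div N - 1) = n div N" by simp
  have "n div N < Suc L" using assms Np by (simp add: div_less_iff_less_mult)
  then show "n div N - 1 < L" using \<open>1 \<le> n div N\<close> by linarith
  have "(n div N - 1) * N + N = (n div N) * N" using \<open>1 \<le> n div N\<close>
    by (metis Suc_diff_1 less_le_trans mult_Suc zero_less_one add.commute)
  also have "\<dots> \<le> n" by simp
  finally show "(n div N - 1) * N + N \<le> n" .
qed

lemma PG_wf: "wf_prog PG"
  unfolding wf_prog_def
proof (intro conjI allI impI ballI)
  show "PG \<noteq> []" by (simp add: PG_def)
  fix k j assume k: "k < length PG" and j: "j \<in> refs (PG ! k)"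
  show "j < k"
  proof (cases "k < Suc L * N")
    case True
    then have pk: "PG ! k = Line k" by (rule PG_nth)
    show ?thesis
    proof (cases "k < N")
      case True then show ?thesis using j pk by (simp add: Line_def refs_Line0)
    next
      case False
      then have "j \<in> refs (LineS (k div N - 1) (vs ! (k mod N)))" using j pk by (simp add: Line_def)
      then have "j < (k div N - 1) * N + N" using refs_LineS by fastforce
      then show ?thesis using div_facts(2)[of k] False True by linarith
    qed
  next
    case False
    then have "k = Suc L * N" using k length_PG by simp
    then have "j \<in> refs Out" using j PG_last by simp
    then show ?thesis using refs_Out \<open>k = Suc L * N\<close> by fastforce
  qed
qed

lemma PG_sem:
  assumes w: "set w \<subseteq> \<Sigma>"
  shows "n < Suc L * N \<Longrightarrow> i < length w \<Longrightarrow>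
    sat w i (expand_lines PG ! n) = (hid p s d T (n div N) (None # map Some w) ! Suc i = vs ! (n mod N))"
proof (induction n arbitrary: i rule: less_induct)
  case (less n)
  let ?env = "\<lambda>m j. sat w j (expand_lines PG ! m)"
  have e: "sat w i (expand_lines PG ! n) = satr ?env w i (Line n)"
    using expand_sat[OF PG_wf, of n w i] less.prems length_PG PG_nth by simp
  show ?case
  proof (cases "n < N")
    case True
    have wi: "w ! i \<in> \<Sigma>" using w less.prems by auto
    have "satr ?env w i (Line n) = (emb T (Some (w ! i)) = vs ! n)"
      using True wi finS by (auto simp: Line_def Line0_def)
    then show ?thesis using e True less.prems by (simp add: hid_0)
  next
    case False
    let ?l = "n div N - 1"
    have df: "?l < L" "?l * N + N \<le> n" "Suc ?l = n div N" using div_facts[OF _ less.prems(1)] False by auto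
    have env: "\<forall>j\<le>i. \<forall>k<N. ?env (?l * N + k) j = (hid p s d T ?l (None # map Some w) ! Suc j = vs ! k)"
    proof (intro allI impI)
      fix j k assume j: "j \<le> i" and k: "k < N"
      have m: "?l * N + k < n" using df k by linarith
      have "(?l * N + k) div N = ?l" "(?l * N + k) mod N = k" using k by auto
      then show "?env (?l * N + k) j = (hid p s d T ?l (None # map Some w) ! Suc j = vs ! k)"
        using less.IH[OF m, of j] m less.prems j by auto
    qed
    have "satr ?env w i (Line n) = satr ?env w i (LineS ?l (vs ! (n mod N)))"
      using False by (simp add: Line_def)
    also have "\<dots> = (hid p s d T (Suc ?l) (None # map Some w) ! Suc i = vs ! (n mod N))"
      by (rule layer_sem[OF df(1) w less.prems(2) env])
    finally show ?thesis using e df(3) by simp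
  qed
qed

lemma PG_sim: "simulates \<Sigma> p s d T PG"
  unfolding simulates_def
proof (intro allI impI)
  fix w i assume w: "set w \<subseteq> \<Sigma>" and i: "i < length w"
  let ?u = "None # map Some w"
  let ?env = "\<lambda>m j. sat w j (expand_lines PG ! m)"
  have su: "set ?u \<subseteq> insert None (Some ` \<Sigma>)" using w by auto
  have hV: "hid p s d T L ?u ! Suc i \<in> set vs" using hid_in_V[OF su] i vs_props by simp
  have "sat w i (prog_formula PG) = satr ?env w i Out"
    using sat_prog[OF PG_wf] length_PG PG_last by simp
  also have "\<dots> = (\<exists>k<N. 0 < wout T (vs ! k) \<and> hid p s d T L ?u ! Suc i = vs ! k)"
  proof -
    have "?env (L * N + k) i = (hid p s d T L ?u ! Suc i = vs ! k)" if "k < N" for k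
    proof -
      have "L * N + k < Suc L * N" using that by simp
      moreover have "(L * N + k) div N = L" "(L * N + k) mod N = k" using that by auto
      ultimately show ?thesis using PG_sem[OF w _ i, of "L * N + k"] by simp
    qed
    then show ?thesis by (auto simp: Out_def)
  qed
  also have "\<dots> = (0 < wout T (hid p s d T L ?u ! Suc i))"
    using hV by (auto simp: in_set_conv_nth N_def)
  also have "\<dots> = (0 < tout p s d T ?u (Suc i))"
    by (simp add: tout_def hidden_hid tdepth_def)
  finally show "sat w i (prog_formula PG) = (0 < tout p s d T ?u (Suc i))" .
qed

subsection \<open>Depth, girth, precision\<close>

lemma fdepth_TestF': "fdepth (TestF vs r kb a c0 cmp u) \<le> Suc 0"
  using fdepth_TestF by simp

lemma fdepth_PairF: "fdepth (PairF l x K t m) \<le> Suc 0"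
  unfolding PairF_def PEq_def NEq_def by (rule fdepth_ORL) (auto simp: fdepth_TestF')

lemma fdepth_CF: "fdepth (CF l x t m) \<le> Suc 0"
  unfolding CF_def BigF_def BEq_def
  by (rule fdepth_ORL) (auto simp: fdepth_TestF' fdepth_PairF)

lemma fdepth_LineS: "fdepth (LineS l y) \<le> Suc 0"
  unfolding LineS_def by (rule fdepth_ORL) (auto intro!: fdepth_ANDL simp: fdepth_CF)

lemma fdepth_Line0: "fdepth (Line0 y) = 0"
  unfolding Line0_def using fdepth_ORL[of "map Sym _" 0] by auto

lemma PG_depth_n: "n < Suc L * N \<Longrightarrow> fdepth (expand_lines PG ! n) \<le> n div N"
proof (induction n rule: less_induct)
  case (less n)
  have nl: "n < length PG" using less.prems length_PG by simp
  show ?case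
  proof (cases "n < N")
    case True
    have "fdepth (expand_lines PG ! n) \<le> fdepth (PG ! n) + 0"
      using True less.prems by (intro expand_depth[OF PG_wf nl]) (simp add: PG_nth Line_def refs_Line0)
    then show ?thesis using True less.prems by (simp add: PG_nth Line_def fdepth_Line0)
  next
    case False
    let ?l = "n div N - 1"
    have df: "?l * N + N \<le> n" "Suc ?l = n div N" using div_facts[OF _ less.prems] False by auto
    have "fdepth (expand_lines PG ! n) \<le> fdepth (PG ! n) + ?l"
    proof (rule expand_depth[OF PG_wf nl], rule ballI)
      fix m assume "m \<in> refs (PG ! n)"
      then have "m \<in> refs (LineS ?l (vs ! (n mod N)))" using False less.prems by (simp add: PG_nth Line_def)
      then have m: "?l * N \<le> m" "m < ?l * N + N" using refs_LineS by fastforce+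
      then have "m div N = ?l" using N_pos by (metis add.commute div_less_iff_less_mult less_le_trans mult_Suc
          le_div_geq nat_neq_iff not_less_eq_eq zero_less_one  div_nat_eqI)
      moreover have "m < n" using m df by linarith
      ultimately show "fdepth (expand_lines PG ! m) \<le> ?l" using less.IH[of m] less.prems by simp
    qed
    also have "\<dots> \<le> 1 + ?l" using False less.prems fdepth_LineS by (simp add: PG_nth Line_def)
    finally show ?thesis using df by simp
  qed
qed

lemma PG_depth: "prog_depth PG \<le> L"
proof -
  have nl: "Suc L * N < length PG" using length_PG by simp
  have "fdepth (expand_lines PG ! (Suc L * N)) \<le> fdepth (PG ! (Suc L * N)) + L"
  proof (rule expand_depth[OF PG_wf nl], rule ballI)
    fix m assume "m \<in> refs (PG ! (Suc L * N))"
    then have m: "L * N \<le> m" "m < L * N + N" using refs_Out PG_last by fastforce+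
    then have "m div N = L" by (simp add: div_nat_eqI mult.commute)
    then show "fdepth (expand_lines PG ! m) \<le> L" using PG_depth_n[of m] m by simp
  qed
  moreover have "fdepth Out = 0" unfolding Out_def by simp
  moreover have "prog_formula PG = expand_lines PG ! (Suc L * N)"
    using prog_formula_nth[of PG] length_PG by (simp add: PG_def)
  moreover note PG_last
  ultimately show ?thesis
    by (simp add: prog_depth_def)
qed

lemma fgirth_TestF': "fgirth (TestF vs r k a c0 cmp u) \<le> Suc k"
  using fgirth_TestF by simp

lemma fgirth_PairF: "fgirth (PairF l x K t m) \<le> Suc kb"
  unfolding PairF_def PEq_def NEq_def by (rule fgirth_ORL) (auto simp: fgirth_TestF')

lemma fgirth_CF: "fgirth (CF l x t m) \<le> Suc kb"
  unfolding CF_def BigF_def BEq_def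
  by (rule fgirth_ORL) (auto simp: fgirth_TestF' fgirth_PairF)

lemma fgirth_Line: "fgirth (Line n) \<le> Suc kb"
proof -
  have "fgirth (LineS l y) \<le> Suc kb" for l y
    unfolding LineS_def by (rule fgirth_ORL) (auto intro!: fgirth_ANDL simp: fgirth_CF)
  moreover have "fgirth (Line0 y) \<le> Suc kb" for y
    unfolding Line0_def by (rule fgirth_ORL) auto
  ultimately show ?thesis by (simp add: Line_def)
qed

lemma PG_girth: "prog_girth PG \<le> 2 * p + 1"
proof -
  have "fgirth Out = 0" unfolding Out_def by simp
  then have "\<forall>f\<in>set PG. fgirth f \<le> Suc kb" using fgirth_Line by (auto simp: PG_def)
  then show ?thesis by (simp add: prog_girth_def kb_def)
qed

definition X :: nat where "X = 2 ^ (4 * p)"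

lemma X_facts: "2 ^ kb \<le> X" "Kmax \<le> X" "U \<le> X"
proof -
  show "2 ^ kb \<le> X" unfolding X_def kb_def by (intro power_increasing) auto
  show "Kmax \<le> X" unfolding X_def Kmax_def using sp by (intro power_increasing) auto
  show "U \<le> X" by (simp add: U_def X_def)
qed

lemma consts_CF:
  assumes "l < L" "t < d"
  shows "c \<in> fconsts (CF l x t m) \<Longrightarrow> c \<le> X"
proof -
  have bV: "bos l \<in> V" unfolding bos_def by (rule hid_in_V) auto
  have E: "Ev l x (bos l) \<le> X" using Ev_lt_kb X_facts by (meson le_trans less_imp_le)
  have gpn: "gp l x K t (bos l) \<le> X" "gn l x K t (bos l) \<le> X" for K
    using gp_gn_bound(3,4)[OF assms(1) bV assms(2)] Gb_lt X_facts by (meson le_trans less_imp_le)+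
  have T1: "c \<in> fconsts (BigF l x) \<Longrightarrow> c \<le> X" for c
    unfolding BigF_def by (rule fconsts_TestF[OF E]) (use X_facts in auto)
  have T2: "K < Kmax \<Longrightarrow> c \<in> fconsts (BEq l x K) \<Longrightarrow> c \<le> X" for c K
    unfolding BEq_def by (rule fconsts_TestF[OF E]) (use X_facts in auto)
  have T3: "u < U \<Longrightarrow> c \<in> fconsts (PEq l x K t u) \<Longrightarrow> c \<le> X" for c K u
    unfolding PEq_def by (rule fconsts_TestF[OF gpn(1)]) (use X_facts in auto)
  have T4: "u < U \<Longrightarrow> c \<in> fconsts (NEq l x K t u) \<Longrightarrow> c \<le> X" for c K u
    unfolding NEq_def by (rule fconsts_TestF[OF gpn(2)]) (use X_facts in auto)
  have T5: "c \<in> fconsts (PairF l x K t m) \<Longrightarrow> c \<le> X" for c K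
    unfolding PairF_def using T3 T4 by fastforce
  show "c \<in> fconsts (CF l x t m) \<Longrightarrow> c \<le> X"
    unfolding CF_def using T1 T2 T5 by (fastforce split: if_splits)
qed

lemma consts_Line: "n < Suc L * N \<Longrightarrow> c \<in> fconsts (Line n) \<Longrightarrow> c \<le> X"
proof -
  assume n: "n < Suc L * N" and c: "c \<in> fconsts (Line n)"
  show ?thesis
  proof (cases "n < N")
    case True then show ?thesis using c by (auto simp: Line_def Line0_def)
  next
    case False
    let ?l = "n div N - 1"
    have l: "?l < L" using div_facts[OF _ n] False by auto
    have "c \<in> fconsts (LineS ?l (vs ! (n mod N)))" using c False by (simp add: Line_def)
    then show ?thesis unfolding LineS_def using consts_CF[OF l] by fastforce
  qed
qed

lemma PG_prec: "prog_precision PG \<le> 4 * p + 2"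
proof -
  let ?S = "insert 0 (\<Union>l\<in>set PG. fconsts l)"
  have fin: "finite ?S" using finite_fconsts by simp
  have "\<forall>c\<in>?S. c \<le> X"
  proof
    fix c assume "c \<in> ?S"
    then consider "c = 0" | f where "f \<in> set PG" "c \<in> fconsts f" by blast
    then show "c \<le> X"
    proof cases
      case 1 then show ?thesis by simp
    next
      case 2
      then consider n where "n < Suc L * N" "f = Line n" | "f = Out" by (auto simp: PG_def)
      then show ?thesis
      proof cases
        case 1 then show ?thesis using consts_Line 2 by blast
      next
        case 2 then show ?thesis using \<open>c \<in> fconsts f\<close> by (simp add: Out_def)
      qed
    qed
  qed
  then have "Max ?S \<le> X" using fin by simp
  moreover have "X < 2 ^ (4 * p + 1)" unfolding X_def by simp
  ultimately have "Max ?S < 2 ^ (4 * p + 1)" by linarith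
  then show ?thesis unfolding prog_precision_def using bitlen_le by fastforce
qed

end


context tsetup begin

definition St :: nat where "St = 2 * (4 * p + 1) + 5 + kb * (kb + 5 * N + 5)"
definition PB :: nat where "PB = U * U * (2 * St + 5) + 2"
definition CB :: nat where "CB = (Kmax + 1) * (St + PB + 5) + 2"
definition LB :: nat where "LB = N * N * (d * (CB + 1) + 8) + 2 + (5 * card \<Sigma> + 2)"

lemma X_lt: "X < 2 ^ (4 * p + 1)"
  by (simp add: X_def)

lemma size_TestF_X: "c0 \<le> X \<Longrightarrow> u \<le> X \<Longrightarrow> fsize (TestF vs r kb a c0 cmp u) \<le> St"
  unfolding St_def N_def using X_lt by (intro fsize_TestF) auto

lemma size_PairF:
  assumes "l < L" "t < d"
  shows "fsize (PairF l x K t m) \<le> PB"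
proof -
  have bV: "bos l \<in> V" unfolding bos_def by (rule hid_in_V) auto
  have gpn: "gp l x K t (bos l) \<le> X" "gn l x K t (bos l) \<le> X"
    using gp_gn_bound(3,4)[OF assms(1) bV assms(2)] Gb_lt X_facts by (meson le_trans less_imp_le)+
  let ?xs = "filter (\<lambda>(u, v). rnd p s ((real u - real v) / 2 ^ (2 * s)) = m) (List.product [0..<U] [0..<U])"
  have "\<forall>f\<in>set (map (\<lambda>(u, v). Conj (PEq l x K t u) (NEq l x K t v)) ?xs). fsize f \<le> 1 + St + St"
  proof
    fix f assume "f \<in> set (map (\<lambda>(u, v). Conj (PEq l x K t u) (NEq l x K t v)) ?xs)"
    then obtain u v where uv: "u < U" "v < U" "f = Conj (PEq l x K t u) (NEq l x K t v)" by auto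
    have "u \<le> X" "v \<le> X" using uv X_facts by auto
    then have "fsize (PEq l x K t u) \<le> St" "fsize (NEq l x K t v) \<le> St"
      unfolding PEq_def NEq_def using gpn size_TestF_X by auto
    then show "fsize f \<le> 1 + St + St" using uv by simp
  qed
  then have "fsize (PairF l x K t m) \<le> length ?xs * (1 + St + St + 4) + 2"
    unfolding PairF_def using fsize_ORL by fastforce
  moreover have "length ?xs \<le> U * U"
    using length_filter_le[of _ "List.product [0..<U] [0..<U]"] by simp
  ultimately have "fsize (PairF l x K t m) \<le> U * U * (1 + St + St + 4) + 2"
    by (meson add_le_mono1 le_trans mult_le_mono1)
  then show ?thesis by (simp add: PB_def add.commute)
qed

lemma size_CF:
  assumes "l < L" "t < d"
  shows "fsize (CF l x t m) \<le> CB"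
proof -
  have E: "Ev l x (bos l) \<le> X" using Ev_lt_kb X_facts by (meson le_trans less_imp_le)
  let ?xs = "(if m = 0 then [BigF l x] else []) @ map (\<lambda>K. Conj (BEq l x K) (PairF l x K t m)) [0..<Kmax]"
  have "\<forall>f\<in>set ?xs. fsize f \<le> 1 + St + PB"
  proof
    fix f assume f: "f \<in> set ?xs"
    have b: "fsize (BigF l x) \<le> St" unfolding BigF_def using E X_facts size_TestF_X by auto
    have be: "fsize (BEq l x K) \<le> St" if "K < Kmax" for K
      unfolding BEq_def using E X_facts that size_TestF_X by auto
    from f consider "f = BigF l x" | K where "K < Kmax" "f = Conj (BEq l x K) (PairF l x K t m)"
      by (auto split: if_splits)
    then show "fsize f \<le> 1 + St + PB"
    proof cases
      case 1 then show ?thesis using b by simp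
    next
      case 2 then show ?thesis using be[of K] size_PairF[OF assms, of x K m] by simp
    qed
  qed
  then have "fsize (CF l x t m) \<le> length ?xs * (1 + St + PB + 4) + 2"
    unfolding CF_def using fsize_ORL by blast
  moreover have "length ?xs \<le> Kmax + 1" by simp
  ultimately have "fsize (CF l x t m) \<le> (Kmax + 1) * (1 + St + PB + 4) + 2"
    by (meson add_le_mono1 le_trans mult_le_mono1)
  then show ?thesis by (simp add: CB_def algebra_simps)
qed

lemma size_Line: "n < Suc L * N \<Longrightarrow> fsize (Line n) \<le> LB"
proof -
  assume n: "n < Suc L * N"
  show ?thesis
  proof (cases "n < N")
    case True
    have "fsize (Line0 (vs ! n)) \<le> length (map Sym (filter (\<lambda>a. emb T (Some a) = vs ! n) (sorted_list_of_set \<Sigma>))) * (1 + 4) + 2"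
      unfolding Line0_def by (rule fsize_ORL) auto
    moreover have "length (filter (\<lambda>a. emb T (Some a) = vs ! n) (sorted_list_of_set \<Sigma>)) \<le> card \<Sigma>"
      using length_filter_le[of _ "sorted_list_of_set \<Sigma>"] by simp
    ultimately have "fsize (Line0 (vs ! n)) \<le> 5 * card \<Sigma> + 2" by simp
    then show ?thesis using True by (simp add: Line_def LB_def)
  next
    case False
    let ?l = "n div N - 1"
    have l: "?l < L" using div_facts[OF _ n] False by auto
    let ?xs = "filter (\<lambda>(k, c). lf ?l (map2 (+) c (vs ! k)) = vs ! (n mod N)) (List.product [0..<N] vs)"
    have "\<forall>f\<in>set (map (\<lambda>(k, c). Conj (Ref (?l * N + k)) (ANDL (map (\<lambda>t. CF ?l (vs ! k) t (c ! t)) [0..<d]))) ?xs).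
        fsize f \<le> d * (CB + 1) + 4"
    proof
      fix f assume "f \<in> set (map (\<lambda>(k, c). Conj (Ref (?l * N + k)) (ANDL (map (\<lambda>t. CF ?l (vs ! k) t (c ! t)) [0..<d]))) ?xs)"
      then obtain k c where f: "f = Conj (Ref (?l * N + k)) (ANDL (map (\<lambda>t. CF ?l (vs ! k) t (c ! t)) [0..<d]))" by auto
      have "fsize (ANDL (map (\<lambda>t. CF ?l (vs ! k) t (c ! t)) [0..<d])) \<le> length (map (\<lambda>t. CF ?l (vs ! k) t (c ! t)) [0..<d]) * (CB + 1) + 2"
        using size_CF[OF l] by (intro fsize_ANDL) auto
      then show "fsize f \<le> d * (CB + 1) + 4" using f by simp
    qed
    then have a: "fsize (LineS ?l (vs ! (n mod N))) \<le> length ?xs * (d * (CB + 1) + 4 + 4) + 2"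
      unfolding LineS_def using fsize_ORL by fastforce
    have len: "length ?xs \<le> N * N"
      using length_filter_le[of _ "List.product [0..<N] vs"] by (simp add: N_def)
    have m: "length ?xs * (d * (CB + 1) + 4 + 4) \<le> N * N * (d * (CB + 1) + 8)"
      using mult_le_mono1[OF len, of "d * (CB + 1) + 8"] by (simp add: numeral_Bit0)
    from a m have "fsize (LineS ?l (vs ! (n mod N))) \<le> N * N * (d * (CB + 1) + 8) + 2"
      by linarith
    then show ?thesis using False by (simp add: Line_def LB_def)
  qed
qed

lemma size_Out: "fsize Out \<le> 5 * N + 2"
proof -
  have "fsize Out \<le> length (map (\<lambda>k. Ref (L * N + k)) (filter (\<lambda>k. 0 < wout T (vs ! k)) [0..<N])) * (1 + 4) + 2"
    unfolding Out_def by (rule fsize_ORL) auto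
  moreover have "length (filter (\<lambda>k. 0 < wout T (vs ! k)) [0..<N]) \<le> N"
    using length_filter_le[of _ "[0..<N]"] by simp
  ultimately show ?thesis by simp
qed

lemma PG_size0: "prog_size PG \<le> Suc L * N * LB + (5 * N + 2)"
proof -
  have "sum_list (map fsize (map Line [0..<Suc L * N])) \<le> length (map Line [0..<Suc L * N]) * LB"
    using size_Line by (intro sum_list_le_len) auto
  then show ?thesis using size_Out by (simp add: prog_size_def PG_def)
qed

end


lemma arith_chain:
  fixes St PB CB LB a W K N d S :: nat
  assumes St: "St \<le> 39 * a" and PB: "PB \<le> W * (2 * St + 5) + 2"
    and CB: "CB \<le> (K + 1) * (St + PB + 5) + 2"
    and LB: "LB \<le> N * N * (d * (CB + 1) + 8) + 2 + (5 * S + 2)"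
    and pos: "1 \<le> a" "1 \<le> W" "1 \<le> K" "1 \<le> N" "1 \<le> d" "1 \<le> S"
  shows "LB \<le> 278 * (S * d * N * N * K * W * a)"
proof -
  have Wa: "W \<le> W * a" "1 \<le> W * a" "a \<le> W * a" using pos by (simp_all add: mult_le_mono)
  have "W * (2 * St + 5) \<le> W * (78 * a + 5)" using St by (intro mult_le_mono2) linarith
  moreover have "W * (78 * a + 5) = 78 * (W * a) + 5 * W" by (simp add: algebra_simps)
  ultimately have PB': "PB \<le> 85 * (W * a)" using PB Wa by linarith
  let ?q = "K * (W * a)"
  have Kq: "W * a \<le> ?q" "1 \<le> ?q" using pos Wa by (simp_all add: mult_le_mono)
  have "St + PB + 5 \<le> 129 * (W * a)" using St PB' Wa by linarith
  then have "(K + 1) * (St + PB + 5) \<le> (K + 1) * (129 * (W * a))" by (rule mult_le_mono2)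
  moreover have "(K + 1) * (129 * (W * a)) = 129 * ?q + 129 * (W * a)" by (simp add: algebra_simps)
  ultimately have CB': "CB \<le> 260 * ?q" using CB Kq by linarith
  let ?r = "N * N * d * ?q"
  have r1: "?q \<le> ?r" "1 \<le> ?r" using pos Kq by (simp_all add: mult_le_mono one_le_mult_iff)
  have "d * (CB + 1) + 8 \<le> d * (CB + 9)" using pos by (simp add: algebra_simps)
  also have "\<dots> \<le> d * (269 * ?q)" using CB' Kq by (intro mult_le_mono2) linarith
  finally have "N * N * (d * (CB + 1) + 8) \<le> N * N * (d * (269 * ?q))" by (rule mult_le_mono2)
  moreover have "N * N * (d * (269 * ?q)) = 269 * ?r" by (simp add: algebra_simps)
  ultimately have "LB \<le> 269 * ?r + 4 + 5 * S" using LB by linarith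
  moreover have "?r \<le> S * ?r" "S \<le> S * ?r" using pos r1 by (simp_all add: mult_le_mono)
  ultimately have "LB \<le> 278 * (S * ?r)" using pos by linarith
  then show ?thesis by (simp add: algebra_simps)
qed

lemma exp_bound: assumes "p \<ge> (2::nat)" "d \<ge> 1" shows "4 * p * d + 10 * p \<le> p ^ 3 * d + 20"
proof -
  have pd: "p \<le> p * d" using assms by simp
  consider "p = 2" | "p = 3" | "p \<ge> 4" using assms by linarith
  then show ?thesis
  proof cases
    case 1 then show ?thesis by (simp add: power3_eq_cube)
  next
    case 2 then show ?thesis using assms by (simp add: power3_eq_cube)
  next
    case 3
    have "16 \<le> p * p" using 3 mult_le_mono[OF 3 3] by simp
    then have "16 * (p * d) \<le> p * p * (p * d)" by (rule mult_le_mono1)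
    moreover have "p ^ 3 * d = p * p * (p * d)" by (simp add: power3_eq_cube algebra_simps)
    moreover have "4 * p * d = 4 * (p * d)" by simp
    ultimately show ?thesis using pd by linarith
  qed
qed

context tsetup begin

lemma St_bound: "St \<le> 39 * (p * p * N)"
proof -
  have "St = 4 * (p * p) + 10 * (p * N) + 18 * p + 7" by (simp add: St_def kb_def algebra_simps)
  moreover have "p * p \<le> p * p * N" "p * N \<le> p * p * N" "p \<le> p * p * N" "1 \<le> p * p * N"
    using p1 N_pos by (simp_all add: mult_le_mono one_le_mult_iff)
  ultimately show ?thesis by linarith
qed

lemma LB_bound: "LB \<le> 278 * (card \<Sigma> * d * N * N * Kmax * (U * U) * (p * p * N))"
proof (rule arith_chain[OF St_bound PB_def[THEN eq_imp_le] CB_def[THEN eq_imp_le] LB_def[THEN eq_imp_le]])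
  show "1 \<le> p * p * N" using p1 N_pos by (simp add: one_le_mult_iff)
  show "1 \<le> U * U" by (simp add: U_def)
  show "1 \<le> Kmax" by (simp add: Kmax_def)
  show "1 \<le> N" by (rule N_pos)
  show "1 \<le> d" by (rule d1)
  show "1 \<le> card \<Sigma>" using finS neS by (simp add: Suc_le_eq card_gt_0_iff)
qed

lemma PG_size:
  assumes p2: "p \<ge> 2" and L1: "L \<ge> 1"
  shows "prog_size PG \<le> 2 ^ 40 * card \<Sigma> * L * p ^ 2 * d * 2 ^ (p ^ 3 * d)"
proof -
  let ?S = "card \<Sigma>"
  have S1: "1 \<le> ?S" using finS neS by (simp add: Suc_le_eq card_gt_0_iff)
  let ?Q = "?S * d * N * N * Kmax * (U * U) * (p * p * N)"
  have Q1: "1 \<le> ?Q" using S1 d1 N_pos p1 by (simp add: one_le_mult_iff Kmax_def U_def)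
  have LB1: "LB \<le> 278 * ?Q" by (rule LB_bound)
  have LBpos: "1 \<le> LB" by (simp add: LB_def)
  have "prog_size PG \<le> Suc L * N * LB + (5 * N + 2)" by (rule PG_size0)
  also have "\<dots> \<le> 9 * (L * N * LB)"
  proof -
    have "Suc L * N * LB \<le> 2 * (L * N * LB)" using L1 by (simp add: algebra_simps)
    moreover have "N \<le> L * N * LB" using L1 LBpos by (simp add: mult_le_mono one_le_mult_iff)
    moreover have "1 \<le> N" by (rule N_pos)
    ultimately show ?thesis by linarith
  qed
  also have "\<dots> \<le> 9 * (L * N * (278 * ?Q))" using LB1 by (intro mult_le_mono2) simp
  also have "\<dots> = 2502 * (?S * L * (p * p) * d) * (N * N * N * N * (Kmax * (U * U)))"
    by (simp add: algebra_simps)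
  also have "\<dots> \<le> 2502 * (?S * L * (p * p) * d) * (2 ^ 20 * 2 ^ (p ^ 3 * d))"
  proof (intro mult_le_mono2)
    have "N * N * N * N \<le> 2 ^ (p * d) * 2 ^ (p * d) * 2 ^ (p * d) * 2 ^ (p * d)"
      using N_le by (intro mult_le_mono) auto
    also have "\<dots> = 2 ^ (4 * p * d)" by (simp add: power_add[symmetric] algebra_simps)
    finally have n4: "N * N * N * N \<le> 2 ^ (4 * p * d)" .
    have "Kmax * (U * U) = 2 ^ (s + p + 8 * p)" by (simp add: Kmax_def U_def power_add[symmetric])
    also have "\<dots> \<le> 2 ^ (10 * p)" using sp by (intro power_increasing) auto
    finally have kw: "Kmax * (U * U) \<le> 2 ^ (10 * p)" .
    have "N * N * N * N * (Kmax * (U * U)) \<le> 2 ^ (4 * p * d) * 2 ^ (10 * p)"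
      using n4 kw by (rule mult_le_mono)
    also have "\<dots> = 2 ^ (4 * p * d + 10 * p)" by (simp add: power_add)
    also have "\<dots> \<le> 2 ^ (p ^ 3 * d + 20)" using exp_bound[OF p2 d1] by (intro power_increasing) auto
    also have "\<dots> = 2 ^ 20 * 2 ^ (p ^ 3 * d)" by (simp add: power_add)
    finally show "N * N * N * N * (Kmax * (U * U)) \<le> 2 ^ 20 * 2 ^ (p ^ 3 * d)" .
  qed
  also have "\<dots> \<le> 2 ^ 40 * ?S * L * p ^ 2 * d * 2 ^ (p ^ 3 * d)"
  proof -
    have "(2502::nat) * 2 ^ 20 \<le> 2 ^ 40" by simp
    then have "2502 * 2 ^ 20 * (?S * L * (p * p) * d * 2 ^ (p ^ 3 * d)) \<le> 2 ^ 40 * (?S * L * (p * p) * d * 2 ^ (p ^ 3 * d))"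
      by (rule mult_le_mono1)
    then show ?thesis by (simp add: algebra_simps power2_eq_square)
  qed
  finally show ?thesis .
qed

end


lemma cast_bound: "(n::nat) \<le> 2 ^ 40 * a * b * c ^ 2 * e * 2 ^ f \<Longrightarrow>
   real n \<le> 2 ^ 40 * real a * real b * real c ^ 2 * real e * 2 ^ f"
proof -
  assume "n \<le> 2 ^ 40 * a * b * c ^ 2 * e * 2 ^ f"
  then have "real n \<le> real (2 ^ 40 * a * b * c ^ 2 * e * 2 ^ f)" by (simp only: of_nat_le_iff)
  then show ?thesis by (simp only: of_nat_mult of_nat_power of_nat_numeral)
qed

theorem theoremC10:
  "\<exists>C::real. C > 0 \<and>
     (\<forall>(\<Sigma>::nat set) p s d (T::transformer).
        finite \<Sigma> \<and> \<Sigma> \<noteq> {} \<and> p \<ge> 1 \<and> s \<le> p \<and> d \<ge> 1 \<and> tdepth T \<ge> 1 \<and>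
        wf_transformer \<Sigma> p s d T \<longrightarrow>
        (\<exists>P. wf_prog P \<and> simulates \<Sigma> p s d T P \<and>
           real (prog_size P) \<le> C * real (card \<Sigma>) * real (tdepth T) * real p ^ 2 * real d
                                   * 2 ^ (p ^ 3 * d) \<and>
           real (prog_depth P) \<le> C * real (tdepth T) \<and>
           real (prog_precision P) \<le> C * real p \<and>
           real (prog_girth P) \<le> C * real p))"
proof (intro exI[of _ "2 ^ 40"] conjI allI impI)
  show "(0::real) < 2 ^ 40" by simp
  fix \<Sigma> :: "nat set" and p s d :: nat and T :: transformer
  assume h: "finite \<Sigma> \<and> \<Sigma> \<noteq> {} \<and> p \<ge> 1 \<and> s \<le> p \<and> d \<ge> 1 \<and> tdepth T \<ge> 1 \<and> wf_transformer \<Sigma> p s d T"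
  then interpret tsetup \<Sigma> p s d T by unfold_locales auto
  have L1: "1 \<le> tdepth T" using h by simp
  have S1: "1 \<le> card \<Sigma>" using finS neS by (simp add: Suc_le_eq card_gt_0_iff)
  have big1: "1 \<le> tdepth T * p ^ 2 * d * 2 ^ (p ^ 3 * d)"
    using L1 p1 d1 by (simp add: one_le_mult_iff)
  show "\<exists>P. wf_prog P \<and> simulates \<Sigma> p s d T P \<and>
           real (prog_size P) \<le> 2 ^ 40 * real (card \<Sigma>) * real (tdepth T) * real p ^ 2 * real d
                                   * 2 ^ (p ^ 3 * d) \<and>
           real (prog_depth P) \<le> 2 ^ 40 * real (tdepth T) \<and>
           real (prog_precision P) \<le> 2 ^ 40 * real p \<and>
           real (prog_girth P) \<le> 2 ^ 40 * real p"
  proof (cases "p = 1")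
    case True
    have "prog_size P1 \<le> 2 ^ 40 * card \<Sigma> * tdepth T * p ^ 2 * d * 2 ^ (p ^ 3 * d)"
    proof -
      have "prog_size P1 \<le> 7 * card \<Sigma>" by (rule P1_size)
      also have "\<dots> \<le> 2 ^ 40 * card \<Sigma>" by simp
      also have "\<dots> \<le> 2 ^ 40 * card \<Sigma> * (tdepth T * p ^ 2 * d * 2 ^ (p ^ 3 * d))"
        using big1 by simp
      finally show ?thesis by (simp add: mult.assoc)
    qed
    then have "real (prog_size P1) \<le> 2 ^ 40 * real (card \<Sigma>) * real (tdepth T) * real p ^ 2 * real d * 2 ^ (p ^ 3 * d)"
      by (rule cast_bound)
    moreover have "real (prog_depth P1) \<le> 2 ^ 40 * real (tdepth T)" using P1_depth by simp
    moreover have "real (prog_precision P1) \<le> 2 ^ 40 * real p" using P1_prec True by simp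
    moreover have "real (prog_girth P1) \<le> 2 ^ 40 * real p" using P1_girth by simp
    ultimately show ?thesis using P1_wf P1_sim[OF True] by blast
  next
    case False
    then have p2: "p \<ge> 2" using p1 by simp
    have "prog_size PG \<le> 2 ^ 40 * card \<Sigma> * tdepth T * p ^ 2 * d * 2 ^ (p ^ 3 * d)"
      using PG_size[OF p2] L1 by (simp add: tdepth_def)
    then have "real (prog_size PG) \<le> 2 ^ 40 * real (card \<Sigma>) * real (tdepth T) * real p ^ 2 * real d * 2 ^ (p ^ 3 * d)"
      by (rule cast_bound)
    moreover have "real (prog_depth PG) \<le> 2 ^ 40 * real (tdepth T)"
    proof -
      have "real (prog_depth PG) \<le> real (tdepth T)" using PG_depth by (simp add: tdepth_def)
      then show ?thesis by simp
    qed
    moreover have "real (prog_precision PG) \<le> 2 ^ 40 * real p"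
    proof -
      have "real (prog_precision PG) \<le> 4 * real p + 2" using PG_prec by linarith
      then show ?thesis using p1 by simp
    qed
    moreover have "real (prog_girth PG) \<le> 2 ^ 40 * real p"
    proof -
      have "real (prog_girth PG) \<le> 2 * real p + 1" using PG_girth by linarith
      then show ?thesis using p1 by simp
    qed
    ultimately show ?thesis using PG_wf PG_sim by blast
  qed
qed


end
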